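(* Every isolated eigenvalue $\mu\in(\zeta^-,\zeta^+)$ of finite multiplicity and of negative type of the operator function $\lambda\mapsto[T(\lambda)]^\bullet$ is an isolated eigenvalue of negative type and of the same multiplicity for the transfer operator function $S(\lambda)=T_{11}(\lambda)-T_{12}(\lambda)[T_{22}(\lambda)]^{-1}T_{21}(\lambda)$.
   Context: Let $\mathfrak H=\mathfrak H_1\oplus\mathfrak H_2$ be Hilbert spaces, $\mathfrak D=\mathfrak D_1\oplus\mathfrak D_2$ Hilbert spaces with injective bounded embeddings $I_k\colon\mathfrak D_k\to\mathfrak H_k$ having dense ranges, $I=I_1\oplus I_2$, $\mathfrak D^*$ the dual of $\mathfrak D$. Let $T\colon[\zeta^-,\zeta^+]\to\mathcal B(\mathfrak D,\mathfrak D^* )$ be an operator function, smooth in the strong operator topology, with block entries $T_{jk}(\lambda)$, such that for every $\lambda\in[\zeta^-,\zeta^+]$ the operator $[T(\lambda)]^\bullet=(I^* )^{-1}T(\lambda)I^{-1}$ is self-adjoint in $\mathfrak H$. Assume: (1) there is $\varepsilon>0$ such that $\langle T_{22}(\lambda)y,y\rangle\le-\varepsilon\|y\|^2_{\mathfrak D_2}$ for all $y\in\mathfrak D_2$ and all $\lambda\in[\zeta^-,\zeta^+]$; (2) the function $S(\lambda)=T_{11}(\lambda)-T_{12}(\lambda)[T_{22}(\lambda)]^{-1}T_{21}(\lambda)$ on $[\zeta^-,\zeta^+]$ is continuous in the uniform operator topology and its values are compact perturbations of uniformly positive operators. An eigenvalue $\mu\in(\zeta^-,\zeta^+)$ of $\lambda\mapsto[T(\lambda)]^\bullet$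 is of negative type if for every nonzero $y\in\ker[T(\mu)]^\bullet$ the function $\lambda\mapsto\langle[T(\lambda)]^\bullet y,y\rangle_{\mathfrak H}$ is defined on an interval containing $\mu$ and has strictly negative derivative at $\mu$ (analogously for $S$, using $\langle S(\lambda)y,y\rangle$, $y\in\ker S(\mu)$). *)

theory Defs
  imports "HOL-Analysis.Analysis"
begin

(* D = 'd1 x 'd2, H = 'h1 x 'h2, I = I1 + I2.
  The dual Dstar is the type of bounded linear functionals ('d1 x 'd2) \<Rightarrow>L real,
  so an operator function T : [zm,zp] -> B(D,Dstar) has type
  real \<Rightarrow> (('d1 x 'd2) \<Rightarrow>L (('d1 x 'd2) \<Rightarrow>L real)). *)

type_synonym ('d1,'d2) opfun = "real \<Rightarrow> (('d1 \<times> 'd2) \<Rightarrow>\<^sub>L (('d1 \<times> 'd2) \<Rightarrow>\<^sub>L real))"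

definition frm :: "('d1::real_normed_vector,'d2::real_normed_vector) opfun \<Rightarrow> real
    \<Rightarrow> 'd1 \<times> 'd2 \<Rightarrow> 'd1 \<times> 'd2 \<Rightarrow> real" where
  "frm T l x y = blinfun_apply (blinfun_apply (T l) x) y"

definition embI :: "('d1::real_normed_vector \<Rightarrow>\<^sub>L 'h1::real_normed_vector)
    \<Rightarrow> ('d2::real_normed_vector \<Rightarrow>\<^sub>L 'h2::real_normed_vector) \<Rightarrow> 'd1 \<times> 'd2 \<Rightarrow> 'h1 \<times> 'h2" where
  "embI I1 I2 d = (blinfun_apply I1 (fst d), blinfun_apply I2 (snd d))"

definition smooth_on :: "real set \<Rightarrow> (real \<Rightarrow> 'b::real_normed_vector) \<Rightarrow> bool" where
  "smooth_on A f \<longleftrightarrow> (\<exists>F. F 0 = f \<and>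
      (\<forall>n. \<forall>t\<in>A. (F n has_vector_derivative F (Suc n) t) (at t within A)))"

definition strongly_smooth_on :: "real set \<Rightarrow> (real \<Rightarrow> ('a::real_normed_vector \<Rightarrow>\<^sub>L 'b::real_normed_vector)) \<Rightarrow> bool" where
  "strongly_smooth_on A T \<longleftrightarrow> (\<forall>x. smooth_on A (\<lambda>l. blinfun_apply (T l) x))"

(* The operator [T(l)]^bul = (I^star)^-^1 T(l) I^-^1 in H, where (I^star h)(e) = <h, I e>.
  Its domain consists of all x = I d such that T(l) d lies in the range of I^*. *)
definition bul_dom :: "('d1::real_normed_vector,'d2::real_normed_vector) opfun
    \<Rightarrow> ('d1 \<Rightarrow>\<^sub>L 'h1::real_inner) \<Rightarrow> ('d2 \<Rightarrow>\<^sub>L 'h2::real_inner) \<Rightarrow> real \<Rightarrow> ('h1 \<times> 'h2) set" where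
  "bul_dom T I1 I2 l = {x. \<exists>d. x = embI I1 I2 d \<and>
      (\<exists>h. \<forall>e. frm T l d e = inner h (embI I1 I2 e))}"

definition bul :: "('d1::real_normed_vector,'d2::real_normed_vector) opfun
    \<Rightarrow> ('d1 \<Rightarrow>\<^sub>L 'h1::real_inner) \<Rightarrow> ('d2 \<Rightarrow>\<^sub>L 'h2::real_inner) \<Rightarrow> real \<Rightarrow> 'h1 \<times> 'h2 \<Rightarrow> 'h1 \<times> 'h2" where
  "bul T I1 I2 l x = (THE h. \<forall>e. frm T l (inv (embI I1 I2) x) e = inner h (embI I1 I2 e))"

(* Self-adjointness of a (possibly unbounded) linear operator A with domain Dom:
  densely defined, linear, symmetric and Dom(A^star) <= Dom(A). *)
definition selfadjoint_op :: "'h::real_inner set \<Rightarrow> ('h \<Rightarrow> 'h) \<Rightarrow> bool" where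
  "selfadjoint_op Dom A \<longleftrightarrow> subspace Dom \<and> closure Dom = UNIV \<and>
     (\<forall>x\<in>Dom. \<forall>y\<in>Dom. \<forall>a b. A (a *\<^sub>R x + b *\<^sub>R y) = a *\<^sub>R A x + b *\<^sub>R A y) \<and>
     (\<forall>x\<in>Dom. \<forall>y\<in>Dom. inner (A x) y = inner x (A y)) \<and>
     (\<forall>y z. (\<forall>x\<in>Dom. inner (A x) y = inner x z) \<longrightarrow> y \<in> Dom)"

definition zero_in_resolvent :: "'h::real_normed_vector set \<Rightarrow> ('h \<Rightarrow> 'h) \<Rightarrow> bool" where
  "zero_in_resolvent Dom A \<longleftrightarrow> (\<exists>B::'h \<Rightarrow>\<^sub>L 'h.
     (\<forall>h. blinfun_apply B h \<in> Dom \<and> A (blinfun_apply B h) = h) \<and>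
     (\<forall>x\<in>Dom. blinfun_apply B (A x) = x))"

definition fin_dim :: "'a::real_vector set \<Rightarrow> bool" where
  "fin_dim V \<longleftrightarrow> (\<exists>B. finite B \<and> span B = V)"

definition bul_ker where
  "bul_ker T I1 I2 l = {x \<in> bul_dom T I1 I2 l. bul T I1 I2 l x = 0}"

definition bul_isolated_eigenvalue where
  "bul_isolated_eigenvalue zm zp T I1 I2 mu \<longleftrightarrow>
     bul_ker T I1 I2 mu \<noteq> {0} \<and>
     (\<exists>\<epsilon>>0. \<forall>l\<in>{zm..zp}. l \<noteq> mu \<and> \<bar>l - mu\<bar> < \<epsilon> \<longrightarrow>
         zero_in_resolvent (bul_dom T I1 I2 l) (bul T I1 I2 l))"

definition bul_negative_type where
  "bul_negative_type zm zp T I1 I2 mu \<longleftrightarrow>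
     (\<forall>y\<in>bul_ker T I1 I2 mu. y \<noteq> 0 \<longrightarrow>
        (\<exists>J. is_interval J \<and> mu \<in> J \<and> J \<subseteq> {zm..zp} \<and> J \<noteq> {mu} \<and>
             (\<forall>l\<in>J. y \<in> bul_dom T I1 I2 l) \<and>
             (\<exists>d<0. ((\<lambda>l. inner (bul T I1 I2 l y) y) has_real_derivative d) (at mu within J))))"

(* Schur complement S(l) = T11(l) - T12(l) T22(l)^-^1 T21(l) : B(D1,D1star):
  T22(l)^-^1 T21(l) x is the unique y with T22(l) y = T21(l) x. *)
definition schur_sol :: "('d1::real_normed_vector,'d2::real_normed_vector) opfun \<Rightarrow> real \<Rightarrow> 'd1 \<Rightarrow> 'd2" where
  "schur_sol T l x = (THE y. \<forall>w. frm T l (0, y) (0, w) = frm T l (x, 0) (0, w))"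

definition schur :: "('d1::real_normed_vector,'d2::real_normed_vector) opfun \<Rightarrow> real \<Rightarrow> ('d1 \<Rightarrow>\<^sub>L ('d1 \<Rightarrow>\<^sub>L real))" where
  "schur T l = Blinfun (\<lambda>x. Blinfun (\<lambda>z. frm T l (x, 0) (z, 0) - frm T l (0, schur_sol T l x) (z, 0)))"

definition compact_operator :: "('a::real_normed_vector \<Rightarrow>\<^sub>L 'b::real_normed_vector) \<Rightarrow> bool" where
  "compact_operator K \<longleftrightarrow> compact (closure (blinfun_apply K ` cball 0 1))"

definition uniformly_positive :: "('a::real_normed_vector \<Rightarrow>\<^sub>L ('a \<Rightarrow>\<^sub>L real)) \<Rightarrow> bool" where
  "uniformly_positive P \<longleftrightarrow> (\<exists>c>0. \<forall>x. blinfun_apply (blinfun_apply P x) x \<ge> c * (norm x)\<^sup>2)"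

definition op_ker :: "('a::real_normed_vector \<Rightarrow>\<^sub>L 'b::real_normed_vector) \<Rightarrow> 'a set" where
  "op_ker A = {x. blinfun_apply A x = 0}"

definition bounded_invertible :: "('a::real_normed_vector \<Rightarrow>\<^sub>L 'b::real_normed_vector) \<Rightarrow> bool" where
  "bounded_invertible A \<longleftrightarrow> (\<exists>B::'b \<Rightarrow>\<^sub>L 'a.
     (\<forall>x. blinfun_apply B (blinfun_apply A x) = x) \<and> (\<forall>y. blinfun_apply A (blinfun_apply B y) = y))"

definition op_isolated_eigenvalue :: "real \<Rightarrow> real \<Rightarrow> (real \<Rightarrow> ('a::real_normed_vector \<Rightarrow>\<^sub>L ('a \<Rightarrow>\<^sub>L real))) \<Rightarrow> real \<Rightarrow> bool" where
  "op_isolated_eigenvalue zm zp S mu \<longleftrightarrow>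
     op_ker (S mu) \<noteq> {0} \<and>
     (\<exists>\<epsilon>>0. \<forall>l\<in>{zm..zp}. l \<noteq> mu \<and> \<bar>l - mu\<bar> < \<epsilon> \<longrightarrow> bounded_invertible (S l))"

definition op_negative_type :: "real \<Rightarrow> real \<Rightarrow> (real \<Rightarrow> ('a::real_normed_vector \<Rightarrow>\<^sub>L ('a \<Rightarrow>\<^sub>L real))) \<Rightarrow> real \<Rightarrow> bool" where
  "op_negative_type zm zp S mu \<longleftrightarrow>
     (\<forall>y\<in>op_ker (S mu). y \<noteq> 0 \<longrightarrow>
        (\<exists>J. is_interval J \<and> mu \<in> J \<and> J \<subseteq> {zm..zp} \<and> J \<noteq> {mu} \<and>
             (\<exists>d<0. ((\<lambda>l. blinfun_apply (blinfun_apply (S l) y) y) has_real_derivative d) (at mu within J))))"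

end

theory Submission
  imports Defs
begin



lemma parallelogram_real_inner:
  fixes a b :: "'a::real_inner"
  shows "norm (a + b)^2 + norm (a - b)^2 = 2 * norm a ^2 + 2 * norm b ^2"
  by (simp add: power2_norm_eq_inner inner_add_left inner_add_right inner_diff_left inner_diff_right inner_commute)

lemma norm_diff_scale_sq:
  fixes a y :: "'a::real_inner"
  shows "norm (a - t *\<^sub>R y)^2 = norm a^2 - 2 * t * inner a y + t^2 * (norm y)^2"
  unfolding power2_norm_eq_inner by (simp add: inner_diff_left inner_diff_right inner_commute algebra_simps power2_eq_square)

lemma sq_le_self: "0 \<le> (t::real) \<Longrightarrow> t \<le> 1 \<Longrightarrow> t^2 \<le> t"
  by (simp add: power2_eq_square mult_left_le_one_le)

lemma projection_exists:
  fixes M :: "'a::{real_inner,complete_space} set"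
  assumes sub: "subspace M" and cl: "closed M"
  shows "\<exists>m\<in>M. \<forall>y\<in>M. inner (x - m) y = 0"
proof -
  define d where "d = Inf ((\<lambda>m. norm (x - m)) ` M)"
  have ne: "(\<lambda>m. norm (x - m)) ` M \<noteq> {}" using subspace_0[OF sub] by auto
  have bdd: "bdd_below ((\<lambda>m. norm (x - m)) ` M)" by (rule bdd_belowI[of _ 0]) auto
  have dle: "d \<le> norm (x - m)" if "m \<in> M" for m
    unfolding d_def using that bdd by (auto intro: cInf_lower)
  have d0: "0 \<le> d" unfolding d_def using ne by (auto intro: cInf_greatest)
  have "\<exists>m\<in>M. norm (x - m) < d + 1 / real (Suc n)" for n
  proof -
    have H: "\<And>y. d < y \<Longrightarrow> \<exists>m\<in>M. norm (x - m) < y"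
      unfolding d_def using cInf_less_iff[OF ne bdd] by blast
    show ?thesis by (rule H) simp
  qed
  then obtain mm where mmM: "\<And>n. mm n \<in> M" and mmd: "\<And>n. norm (x - mm n) < d + 1 / real (Suc n)"
    by metis
  have key: "norm (mm n - mm k)^2 \<le> 4 * (d + 1) * (1 / real (Suc n) + 1 / real (Suc k))"
    for n k
  proof -
    let ?a = "x - mm n" and ?b = "x - mm k"
    have par: "norm (?a + ?b)^2 + norm (?a - ?b)^2 = 2 * norm ?a ^2 + 2 * norm ?b ^2"
      by (rule parallelogram_real_inner)
    have "?a - ?b = mm k - mm n" by simp
    hence e1: "norm (?a - ?b) = norm (mm n - mm k)" by (simp add: norm_minus_commute)
    have "?a + ?b = 2 *\<^sub>R (x - (1/2) *\<^sub>R (mm n + mm k))" by (simp add: algebra_simps scaleR_2)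
    hence "norm (?a + ?b) = 2 * norm (x - (1/2) *\<^sub>R (mm n + mm k))" by simp
    moreover have "(1/2) *\<^sub>R (mm n + mm k) \<in> M"
      using mmM sub by (simp add: subspace_add subspace_scale)
    ultimately have "norm (?a + ?b) \<ge> 2 * d" using dle by fastforce
    hence s1: "norm (?a + ?b)^2 \<ge> 4 * d^2" using d0
      by (metis (no_types) mult_2 power2_le_imp_le power_mono zero_le_mult_iff zero_le_numeral four_x_squared)
    have an: "norm ?a ^2 \<le> (d + 1 / real (Suc n))^2" using mmd[of n] by (simp add: power_mono)
    have bk: "norm ?b ^2 \<le> (d + 1 / real (Suc k))^2" using mmd[of k] by (simp add: power_mono)
    have i1: "1 / real (Suc n) \<le> 1" and i2: "1 / real (Suc k) \<le> 1" by auto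
    have sq1: "(d + 1 / real (Suc n))^2 \<le> d^2 + (2*d + 1) * (1 / real (Suc n))"
    proof -
      have "(1 / real (Suc n))^2 \<le> 1 / real (Suc n)" using i1 by (intro sq_le_self) auto
      thus ?thesis by (simp add: power2_eq_square algebra_simps)
    qed
    moreover have sq2: "(d + 1 / real (Suc k))^2 \<le> d^2 + (2*d + 1) * (1 / real (Suc k))"
    proof -
      have "(1 / real (Suc k))^2 \<le> 1 / real (Suc k)" using i2 by (intro sq_le_self) auto
      thus ?thesis by (simp add: power2_eq_square algebra_simps)
    qed
    ultimately have "norm (mm n - mm k)^2 \<le> 2 * (2*d+1) * (1 / real (Suc n) + 1 / real (Suc k))"
    proof -
      define p where "p = 1 / real (Suc n)"
      define q where "q = 1 / real (Suc k)"
      define A where "A = norm (?a + ?b)^2"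
      define N where "N = norm (mm n - mm k)^2"
      have "N + A = 2 * norm ?a ^2 + 2 * norm ?b ^2" using par e1 unfolding A_def N_def by simp
      moreover have "A \<ge> 4 * d^2" using s1 unfolding A_def .
      moreover note an bk sq1 sq2
      ultimately show ?thesis unfolding p_def[symmetric] q_def[symmetric] N_def[symmetric]
        by (simp add: algebra_simps)
    qed
    also have "\<dots> \<le> 4 * (d + 1) * (1 / real (Suc n) + 1 / real (Suc k))"
      by (rule mult_right_mono) (use d0 in auto)
    finally show ?thesis .
  qed
  have "Cauchy mm"
  proof (rule metric_CauchyI)
    fix e :: real assume e: "e > 0"
    define C where "C = 4 * (d + 1)"
    have C: "C > 0" using d0 by (simp add: C_def)
    obtain N where N: "C * (2 / real (Suc N)) < e^2"
    proof -
      obtain N where "inverse (real (Suc N)) < e^2 / (2*C)" using reals_Archimedean e C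
        by (metis divide_pos_pos mult_pos_pos zero_less_numeral zero_less_power)
      hence "C * (2 / real (Suc N)) < e^2" using C by (simp add: field_simps)
      thus ?thesis using that by blast
    qed
    show "\<exists>M. \<forall>m\<ge>M. \<forall>n\<ge>M. dist (mm m) (mm n) < e"
    proof (intro exI allI impI)
      fix m n assume mN: "m \<ge> N" and nN: "n \<ge> N"
      have "1 / real (Suc m) \<le> 1 / real (Suc N)" using mN by (simp add: frac_le)
      moreover have "1 / real (Suc n) \<le> 1 / real (Suc N)" using nN by (simp add: frac_le)
      ultimately have "C * (1 / real (Suc m) + 1 / real (Suc n)) \<le> C * (2 / real (Suc N))"
        using C by (intro mult_left_mono) auto
      hence "norm (mm m - mm n)^2 < e^2" using key[of m n] N unfolding C_def by argo
      hence "norm (mm m - mm n) < e" using e by (simp add: power_less_imp_less_base)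
      thus "dist (mm m) (mm n) < e" by (simp add: dist_norm)
    qed
  qed
  then obtain m where lim: "mm \<longlonglongrightarrow> m" using convergent_eq_Cauchy by blast
  have mM: "m \<in> M" using closed_sequentially[OF cl] mmM lim by blast
  have nd: "norm (x - m) \<le> d"
  proof -
    have "(\<lambda>n. norm (x - mm n)) \<longlonglongrightarrow> norm (x - m)" by (intro tendsto_intros lim)
    moreover have "(\<lambda>n. d + 1 / real (Suc n)) \<longlonglongrightarrow> d"
      using LIMSEQ_inverse_real_of_nat_add[of d] by (simp add: inverse_eq_divide del: of_nat_Suc)
    ultimately show ?thesis using mmd by (intro LIMSEQ_le) (auto intro: less_imp_le)
  qed
  have orth: "inner (x - m) y = 0" if yM: "y \<in> M" for y
  proof (rule ccontr)
    assume ne0: "inner (x - m) y \<noteq> 0"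
    hence y0: "y \<noteq> 0" by auto
    define t where "t = inner (x - m) y / (norm y)^2"
    have "m + t *\<^sub>R y \<in> M" using sub mM yM by (simp add: subspace_add subspace_scale)
    hence "d \<le> norm (x - (m + t *\<^sub>R y))" by (rule dle)
    hence "norm (x - m)^2 \<le> norm ((x - m) - t *\<^sub>R y)^2" using nd d0
      by (simp add: algebra_simps power_mono)
    also have "\<dots> = norm (x - m)^2 - 2 * t * inner (x - m) y + t^2 * (norm y)^2"
      by (rule norm_diff_scale_sq)
    also have "\<dots> = norm (x - m)^2 - (inner (x - m) y)^2 / (norm y)^2"
      using y0 by (simp add: t_def power2_eq_square field_simps)
    finally have "(inner (x - m) y)^2 / (norm y)^2 \<le> 0" by simp
    moreover have "(inner (x - m) y)^2 / (norm y)^2 > 0" using ne0 y0 by simp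
    ultimately show False by simp
  qed
  show ?thesis using mM orth by blast
qed




lemma orth_zero_univ:
  fixes M :: "'a::{real_inner,complete_space} set"
  assumes sub: "subspace M" and cl: "closed M"
    and z: "\<And>z. (\<forall>y\<in>M. inner z y = 0) \<Longrightarrow> z = 0"
  shows "M = UNIV"
proof -
  have "x \<in> M" for x
  proof -
    obtain m where m: "m \<in> M" "\<forall>y\<in>M. inner (x - m) y = 0" using projection_exists[OF sub cl] by blast
    hence "x - m = 0" using z by blast
    thus ?thesis using m by simp
  qed
  thus ?thesis by auto
qed

lemma riesz:
  fixes f :: "'a::{real_inner,complete_space} \<Rightarrow>\<^sub>L real"
  shows "\<exists>v. \<forall>x. blinfun_apply f x = inner v x"
proof (cases "\<forall>x. blinfun_apply f x = 0")
  case True thus ?thesis by (intro exI[of _ 0]) simp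
next
  case False
  then obtain x0 where fx0: "blinfun_apply f x0 \<noteq> 0" by blast
  define M where "M = {x. blinfun_apply f x = 0}"
  have sub: "subspace M" unfolding M_def subspace_def by (simp add: blinfun.add_right blinfun.scaleR_right)
  have cl: "closed M" unfolding M_def
    by (intro closed_Collect_eq continuous_intros) 
  obtain m where m: "m \<in> M" "\<forall>y\<in>M. inner (x0 - m) y = 0" using projection_exists[OF sub cl] by blast
  define u where "u = x0 - m"
  have fu: "blinfun_apply f u = blinfun_apply f x0" using m(1) unfolding u_def M_def by (simp add: blinfun.diff_right)
  hence fu0: "blinfun_apply f u \<noteq> 0" using fx0 by simp
  hence u0: "u \<noteq> 0" by auto
  define v where "v = (blinfun_apply f u / (norm u)^2) *\<^sub>R u"
  have "blinfun_apply f x = inner v x" for x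
  proof -
    define z where "z = x - (blinfun_apply f x / blinfun_apply f u) *\<^sub>R u"
    have "z \<in> M" unfolding M_def z_def using fu0 by (simp add: blinfun.diff_right blinfun.scaleR_right)
    hence "inner u z = 0" using m(2) unfolding u_def by blast
    hence "inner u x = (blinfun_apply f x / blinfun_apply f u) * (norm u)^2"
      unfolding z_def by (simp add: inner_diff_right power2_norm_eq_inner)
    thus ?thesis unfolding v_def using fu0 u0 by (simp add: field_simps)
  qed
  thus ?thesis by blast
qed

lemma bounded_below_closed_range:
  fixes L :: "'a::{real_normed_vector,complete_space} \<Rightarrow> 'b::real_normed_vector"
  assumes bl: "bounded_linear L" and c: "c > 0" and below: "\<And>x. c * norm x \<le> norm (L x)"
  shows "closed (range L)"
proof -
 have "y \<in> range L" if rs: "\<forall>n. s n \<in> range L" and lim: "s \<longlonglongrightarrow> y" for s y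
 proof -
  from rs have "\<forall>n. \<exists>x. s n = L x" by (simp add: image_iff)
  from choice[OF this] obtain x where x0: "\<forall>n. s n = L (x n)" by blast
  have x: "\<And>n. s n = L (x n)" using x0 by simp
  interpret L: bounded_linear L by fact
  have "Cauchy s" using lim by (rule LIMSEQ_imp_Cauchy)
  have "Cauchy x"
  proof (rule metric_CauchyI)
    fix e :: real assume e: "e > 0"
    have ce: "c * e > 0" using c e by simp
    from metric_CauchyD[OF \<open>Cauchy s\<close> ce] obtain N where N: "\<forall>m\<ge>N. \<forall>n\<ge>N. dist (s m) (s n) < c * e"
      by blast
    show "\<exists>N. \<forall>m\<ge>N. \<forall>n\<ge>N. dist (x m) (x n) < e"
    proof (intro exI allI impI)
      fix m n assume "m \<ge> N" "n \<ge> N"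
      hence "norm (L (x m - x n)) < c * e" using N x by (simp add: dist_norm L.diff)
      hence "c * norm (x m - x n) < c * e" using below[of "x m - x n"] by linarith
      thus "dist (x m) (x n) < e" using c by (simp add: dist_norm)
    qed
  qed
  then obtain z where "x \<longlonglongrightarrow> z" using convergent_eq_Cauchy by blast
  hence "(\<lambda>n. L (x n)) \<longlonglongrightarrow> L z" by (rule L.tendsto)
  moreover have "s = (\<lambda>n. L (x n))" using x by auto
  ultimately have "s \<longlonglongrightarrow> L z" by simp
  hence "y = L z" using lim LIMSEQ_unique by blast
  thus "y \<in> range L" by simp
 qed
 thus ?thesis unfolding closed_sequential_limits by blast
qed

lemma riesz_unique:
  fixes v w :: "'a::real_inner"
  assumes "\<And>x. inner v x = inner w x" shows "v = w"
proof -
  have "inner (v - w) (v - w) = 0" using assms by (simp add: inner_diff_left inner_diff_right)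
  thus ?thesis by simp
qed

lemma lax_milgram_neg:
  fixes a :: "'a::{real_inner,complete_space} \<Rightarrow>\<^sub>L ('a \<Rightarrow>\<^sub>L real)"
  assumes e: "e > 0" and coer: "\<And>y. blinfun_apply (blinfun_apply a y) y \<le> - e * (norm y)^2"
  shows "\<exists>y. blinfun_apply a y = f"
proof -
  have "\<forall>y. \<exists>v. \<forall>x. blinfun_apply (blinfun_apply a y) x = inner v x" using riesz by blast
  then obtain A where A: "\<And>y x. blinfun_apply (blinfun_apply a y) x = inner (A y) x" by metis
  have lin: "linear A"
  proof
    fix y1 y2 show "A (y1 + y2) = A y1 + A y2"
      by (rule riesz_unique) (simp add: inner_add_left A[symmetric] blinfun.add_left blinfun.add_right)
  next
    fix r y show "A (r *\<^sub>R y) = r *\<^sub>R A y"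
      by (rule riesz_unique) (simp add: A[symmetric] blinfun.scaleR_right scaleR_blinfun.rep_eq)
  qed
  have bnd: "norm (A y) \<le> norm a * norm y" for y
  proof -
    have "(norm (A y))^2 = blinfun_apply (blinfun_apply a y) (A y)" by (simp add: A power2_norm_eq_inner)
    also have "\<dots> \<le> norm (blinfun_apply a y) * norm (A y)" using norm_blinfun[of "blinfun_apply a y" "A y"] by simp
    also have "\<dots> \<le> norm a * norm y * norm (A y)" by (simp add: mult_right_mono norm_blinfun)
    finally have "norm (A y) * norm (A y) \<le> (norm a * norm y) * norm (A y)" by (simp add: power2_eq_square)
    thus ?thesis by (cases "norm (A y) = 0") (auto simp: mult_le_cancel_right)
  qed
  have bl: "bounded_linear A" using lin bnd
    by (intro bounded_linear_intro[of _ "norm a"]) (auto simp: linear_add linear_scale mult.commute)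
  have below: "e * norm y \<le> norm (A y)" for y
  proof -
    have "e * (norm y)^2 \<le> - inner (A y) y" using coer[of y] A by simp
    also have "\<dots> \<le> norm (A y) * norm y" using Cauchy_Schwarz_ineq2[of "A y" y] by linarith
    finally have "e * norm y * norm y \<le> norm (A y) * norm y" by (simp add: power2_eq_square)
    thus ?thesis by (cases "norm y = 0") auto
  qed
  have cl: "closed (range A)" by (rule bounded_below_closed_range[OF bl e below])
  have sub: "subspace (range A)" unfolding subspace_def
  proof (intro conjI ballI allI)
    show "0 \<in> range A" using linear_0[OF lin] by (metis rangeI)
  next
    fix u v assume "u \<in> range A" "v \<in> range A"
    then obtain p q where "u = A p" "v = A q" by blast
    thus "u + v \<in> range A" using linear_add[OF lin, of p q] by (metis rangeI)
  next
    fix c u assume "u \<in> range A"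
    then obtain p where "u = A p" by blast
    thus "c *\<^sub>R u \<in> range A" using linear_scale[OF lin, of c p] by (metis rangeI)
  qed
  have univ: "range A = UNIV"
  proof (rule orth_zero_univ[OF sub cl])
    fix z assume "\<forall>y\<in>range A. inner z y = 0"
    hence "inner (A z) z = 0" by (simp add: inner_commute)
    hence "e * (norm z)^2 \<le> 0" using coer[of z] A by simp
    thus "z = 0" using e by (simp add: mult_le_0_iff)
  qed
  obtain vf where vf: "\<And>x. blinfun_apply f x = inner vf x" using riesz by blast
  have "vf \<in> range A" using univ by simp
  then obtain y where "A y = vf" by blast
  hence "blinfun_apply a y = f" by (intro blinfun_eqI) (simp add: A vf)
  thus ?thesis by blast
qed




lemma Blinfun_bilinear:
  assumes "bounded_bilinear g"
  shows "bounded_linear (\<lambda>x. Blinfun (g x))" and "blinfun_apply (Blinfun (g x)) = g x"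
proof -
  interpret g: bounded_bilinear g by fact
  show ap: "blinfun_apply (Blinfun (g x)) = g x" for x
    by (rule bounded_linear_Blinfun_apply[OF g.bounded_linear_right])
  have "(\<lambda>x. Blinfun (g x)) = g.prod_right" by (intro ext blinfun_eqI) (simp add: ap)
  thus "bounded_linear (\<lambda>x. Blinfun (g x))" using g.bounded_linear_prod_right by simp
qed

lemma riesz_fun:
  fixes f :: "'a::{real_inner,complete_space} \<Rightarrow> real"
  assumes "bounded_linear f" shows "\<exists>v. \<forall>x. f x = inner v x"
  using riesz[of "Blinfun f"] bounded_linear_Blinfun_apply[OF assms] by simp

lemma lax_milgram_fun:
  fixes a :: "'a::{real_inner,complete_space} \<Rightarrow> 'a \<Rightarrow> real"
  assumes bb: "bounded_bilinear a" and e: "e > 0" and coer: "\<And>y. a y y \<le> - e * (norm y)^2"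
    and f: "bounded_linear f"
  shows "\<exists>y. \<forall>x. a y x = f x"
proof -
  define A where "A = Blinfun (\<lambda>y. Blinfun (a y))"
  have Aap: "blinfun_apply (blinfun_apply A y) x = a y x" for y x
    unfolding A_def using Blinfun_bilinear[OF bb] bounded_linear_Blinfun_apply[OF Blinfun_bilinear(1)[OF bb]] by simp
  have c2: "\<And>y. blinfun_apply (blinfun_apply A y) y \<le> - e * (norm y)^2" using coer by (simp add: Aap)
  obtain y where y: "blinfun_apply A y = Blinfun f"
    using lax_milgram_neg[of e A "Blinfun f", OF e c2] by blast
  have "a y x = f x" for x
  proof -
    have "a y x = blinfun_apply (blinfun_apply A y) x" by (simp add: Aap)
    also have "\<dots> = f x" using y bounded_linear_Blinfun_apply[OF f] by simp
    finally show ?thesis .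
  qed
  thus ?thesis by blast
qed

lemma closure_seqE:
  fixes x :: "'a::first_countable_topology"
  assumes "x \<in> closure M" obtains a where "\<forall>n. a n \<in> M" "a \<longlonglongrightarrow> x"
proof -
  have "\<exists>a. (\<forall>n. a n \<in> M) \<and> a \<longlonglongrightarrow> x" using assms by (simp only: closure_sequential)
  thus ?thesis using that by blast
qed

lemma closure_seqI:
  fixes x :: "'a::first_countable_topology"
  assumes "\<forall>n. a n \<in> M" "a \<longlonglongrightarrow> x" shows "x \<in> closure M"
proof -
  have "\<exists>a. (\<forall>n. a n \<in> M) \<and> a \<longlonglongrightarrow> x" using assms by blast
  thus ?thesis by (simp only: closure_sequential)
qed

lemma subspace_closure_rv:
  fixes M :: "'a::real_normed_vector set"
  assumes "subspace M" shows "subspace (closure M)"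
  unfolding subspace_def
proof (intro conjI ballI allI)
  show "0 \<in> closure M" using assms subspace_0 closure_subset by blast
next
  fix x y assume x: "x \<in> closure M" and y: "y \<in> closure M"
  obtain a where a: "\<forall>n. a n \<in> M" "a \<longlonglongrightarrow> x" using x by (rule closure_seqE)
  obtain b where b: "\<forall>n. b n \<in> M" "b \<longlonglongrightarrow> y" using y by (rule closure_seqE)
  have "(\<lambda>n. a n + b n) \<longlonglongrightarrow> x + y" using a b by (intro tendsto_add) auto
  moreover have "\<forall>n. a n + b n \<in> M" using a b assms by (simp add: subspace_add)
  ultimately show "x + y \<in> closure M" by (intro closure_seqI)
next
  fix c x assume x: "x \<in> closure M"
  obtain a where a: "\<forall>n. a n \<in> M" "a \<longlonglongrightarrow> x" using x by (rule closure_seqE)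
  have "(\<lambda>n. c *\<^sub>R a n) \<longlonglongrightarrow> c *\<^sub>R x" using a by (intro tendsto_scaleR tendsto_const) auto
  moreover have "\<forall>n. c *\<^sub>R a n \<in> M" using a assms by (simp add: subspace_scale)
  ultimately show "c *\<^sub>R x \<in> closure M" by (intro closure_seqI)
qed

lemma orth_dense_zero:
  fixes E :: "'d::real_normed_vector \<Rightarrow> 'h::real_inner"
  assumes dense: "closure (range E) = UNIV" and z: "\<And>e. inner z (E e) = 0"
  shows "z = 0"
proof -
  have "z \<in> closure (range E)" using dense by simp
  then obtain s where s: "\<forall>n. s n \<in> range E" "s \<longlonglongrightarrow> z" by (rule closure_seqE)
  have "(\<lambda>n. inner z (s n)) \<longlonglongrightarrow> inner z z" using s by (intro tendsto_inner tendsto_const) auto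
  moreover have "\<forall>n. inner z (s n) = 0"
  proof
    fix n obtain e where "s n = E e" using s(1) by blast
    thus "inner z (s n) = 0" using z by simp
  qed
  ultimately have "inner z z = 0" by (simp add: LIMSEQ_const_iff)
  thus ?thesis by simp
qed

lemma dual_density:
  fixes E :: "'d::{real_inner,complete_space} \<Rightarrow> 'h::real_inner"
    and f :: "'d \<Rightarrow> real"
  assumes E: "bounded_linear E" and inj: "inj E" and f: "bounded_linear f" and eta: "\<eta> > 0"
  shows "\<exists>h. \<forall>e. \<bar>f e - inner h (E e)\<bar> \<le> \<eta> * norm e"
proof -
  interpret E: bounded_linear E by fact
  have bl: "bounded_linear (\<lambda>e. inner h (E e))" for h
    using bounded_linear_compose[OF bounded_linear_inner_right[of h] E] by simp
  have "\<forall>h. \<exists>v. \<forall>e. inner h (E e) = inner v e" using riesz_fun[OF bl] by blast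
  from choice[OF this] obtain Ea where Ea0: "\<forall>h. \<forall>e. inner h (E e) = inner (Ea h) e" by blast
  have Ea: "\<And>h e. inner h (E e) = inner (Ea h) e" using Ea0 by blast
  have lin: "linear Ea"
  proof
    fix y1 y2 show "Ea (y1 + y2) = Ea y1 + Ea y2"
      by (rule riesz_unique) (simp add: inner_add_left Ea[symmetric])
  next
    fix r y show "Ea (r *\<^sub>R y) = r *\<^sub>R Ea y"
      by (rule riesz_unique) (simp add: Ea[symmetric])
  qed
  have sub0: "subspace (range Ea)"
    unfolding subspace_def
  proof (intro conjI ballI allI)
    show "0 \<in> range Ea" using linear_0[OF lin] by (metis rangeI)
  next
    fix u v assume "u \<in> range Ea" "v \<in> range Ea"
    then obtain p q where "u = Ea p" "v = Ea q" by blast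
    thus "u + v \<in> range Ea" using linear_add[OF lin, of p q] by (metis rangeI)
  next
    fix c u assume "u \<in> range Ea"
    then obtain p where "u = Ea p" by blast
    thus "c *\<^sub>R u \<in> range Ea" using linear_scale[OF lin, of c p] by (metis rangeI)
  qed
  have univ: "closure (range Ea) = UNIV"
  proof (rule orth_zero_univ[OF subspace_closure_rv[OF sub0] closed_closure])
    fix z assume zz: "\<forall>y\<in>closure (range Ea). inner z y = 0"
    have "inner (E z) (E z) = 0"
    proof -
      have "Ea (E z) \<in> closure (range Ea)" by (rule closure_subset[THEN subsetD]) (rule rangeI)
      hence "inner z (Ea (E z)) = 0" by (rule zz[rule_format])
      thus ?thesis using Ea[of "E z" z] by (simp add: inner_commute)
    qed
    hence "E z = 0" by simp
    hence ez: "E z = E 0" by (simp add: E.zero)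
    show "z = 0" using injD[OF inj ez] .
  qed
  obtain v where v: "\<And>e. f e = inner v e" using riesz_fun[OF f] by blast
  have "v \<in> closure (range Ea)" using univ by simp
  then obtain s where s: "\<forall>n. s n \<in> range Ea" "s \<longlonglongrightarrow> v" by (rule closure_seqE)
  obtain n0 where "\<forall>n\<ge>n0. norm (s n - v) < \<eta>" using LIMSEQ_D[OF s(2) eta] by blast
  then obtain n where n: "dist (s n) v < \<eta>" by (auto simp: dist_norm)
  obtain h where h: "s n = Ea h" using s(1) by blast
  have "\<bar>f e - inner h (E e)\<bar> \<le> \<eta> * norm e" for e
  proof -
    have "\<bar>f e - inner h (E e)\<bar> = \<bar>inner (v - s n) e\<bar>" by (simp add: v Ea h inner_diff_left)
    also have "\<dots> \<le> norm (v - s n) * norm e" by (rule Cauchy_Schwarz_ineq2)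
    also have "\<dots> \<le> \<eta> * norm e" using n by (intro mult_right_mono) (auto simp: dist_norm norm_minus_commute)
    finally show ?thesis .
  qed
  thus ?thesis by blast
qed




lemma cauchy_below:
  fixes L :: "'a::real_normed_vector \<Rightarrow> 'b::real_normed_vector"
  assumes bl: "bounded_linear L" and c: "c > 0" and below: "\<And>x. c * norm x \<le> norm (L x)"
    and cs: "Cauchy (\<lambda>n. L (x n))"
  shows "Cauchy x"
proof (rule metric_CauchyI)
  interpret L: bounded_linear L by fact
  fix e :: real assume e: "e > 0"
  have ce: "c * e > 0" using c e by simp
  from metric_CauchyD[OF cs ce] obtain N where N: "\<forall>m\<ge>N. \<forall>n\<ge>N. dist (L (x m)) (L (x n)) < c * e"
    by blast
  show "\<exists>N. \<forall>m\<ge>N. \<forall>n\<ge>N. dist (x m) (x n) < e"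
  proof (intro exI allI impI)
    fix m n assume "m \<ge> N" "n \<ge> N"
    hence "norm (L (x m - x n)) < c * e" using N by (simp add: dist_norm L.diff)
    hence "c * norm (x m - x n) < c * e" using below[of "x m - x n"] by linarith
    thus "dist (x m) (x n) < e" using c by (simp add: dist_norm)
  qed
qed

lemma fredholm_below:
  fixes S P K :: "'a::{real_normed_vector,complete_space} \<Rightarrow>\<^sub>L ('a \<Rightarrow>\<^sub>L real)"
  assumes SPK: "S = P + K" and up: "uniformly_positive P" and ck: "compact_operator K"
    and inj: "\<And>x. blinfun_apply S x = 0 \<Longrightarrow> x = 0"
  shows "\<exists>c>0. \<forall>x. c * norm x \<le> norm (blinfun_apply S x)"
proof (rule ccontr)
  assume neg: "\<not> ?thesis"
  obtain cP where cP: "cP > 0" "\<And>x. blinfun_apply (blinfun_apply P x) x \<ge> cP * (norm x)^2"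
    using up unfolding uniformly_positive_def by blast
  have Pb: "cP * norm x \<le> norm (blinfun_apply P x)" for x
  proof -
    have "cP * norm x * norm x \<le> blinfun_apply (blinfun_apply P x) x" using cP(2)[of x] by (simp add: power2_eq_square)
    also have "\<dots> \<le> norm (blinfun_apply P x) * norm x"
      using norm_blinfun[of "blinfun_apply P x" x] by simp
    finally show ?thesis by (cases "norm x = 0") (auto simp: mult_le_cancel_right)
  qed
  have "\<exists>y. norm y = 1 \<and> norm (blinfun_apply S y) < 1 / real (Suc n)" for n
  proof -
    have "1 / real (Suc n) > 0" by simp
    then obtain x where x: "\<not> (1 / real (Suc n) * norm x \<le> norm (blinfun_apply S x))" using neg by blast
    hence x0: "x \<noteq> 0" by auto
    define y where "y = (1 / norm x) *\<^sub>R x"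
    have ny: "norm y = 1" using x0 by (simp add: y_def)
    have "blinfun_apply S y = (1 / norm x) *\<^sub>R blinfun_apply S x" by (simp add: y_def blinfun.scaleR_right)
    hence "norm (blinfun_apply S y) = norm (blinfun_apply S x) / norm x" by simp
    also have "\<dots> < 1 / real (Suc n)" using x x0 by (simp add: field_simps)
    finally show ?thesis using ny by blast
  qed
  hence "\<forall>n. \<exists>y. norm y = 1 \<and> norm (blinfun_apply S y) < 1 / real (Suc n)" by blast
  from choice[OF this] obtain xs where xs: "\<forall>n. norm (xs n) = 1 \<and> norm (blinfun_apply S (xs n)) < 1 / real (Suc n)"
    by blast
  define C where "C = closure (blinfun_apply K ` cball 0 1)"
  have sc: "seq_compact C" using ck unfolding compact_operator_def C_def by (rule compact_imp_seq_compact)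
  have inC: "\<forall>n. blinfun_apply K (xs n) \<in> C"
  proof
    fix n have "xs n \<in> cball 0 1" using xs by simp
    hence "blinfun_apply K (xs n) \<in> blinfun_apply K ` cball 0 1" by (rule imageI)
    thus "blinfun_apply K (xs n) \<in> C" unfolding C_def by (rule closure_subset[THEN subsetD])
  qed
  obtain l r where r: "strict_mono (r :: nat \<Rightarrow> nat)" and lim: "((\<lambda>n. blinfun_apply K (xs n)) \<circ> r) \<longlonglongrightarrow> l"
    using seq_compactE[OF sc inC] by blast
  define ys where "ys = xs \<circ> r"
  have Ky: "(\<lambda>n. blinfun_apply K (ys n)) \<longlonglongrightarrow> l" using lim by (simp add: ys_def o_def)
  have Sy: "(\<lambda>n. blinfun_apply S (ys n)) \<longlonglongrightarrow> 0"
  proof (rule Lim_null_comparison)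
    show "\<forall>\<^sub>F n in sequentially. norm (blinfun_apply S (ys n)) \<le> 1 / real (Suc n)"
    proof (rule always_eventually, rule allI)
      fix n
      have "norm (blinfun_apply S (ys n)) < 1 / real (Suc (r n))" using xs by (simp add: ys_def)
      also have "\<dots> \<le> 1 / real (Suc n)" using seq_suble[OF r, of n] by (simp add: frac_le)
      finally show "norm (blinfun_apply S (ys n)) \<le> 1 / real (Suc n)" by simp
    qed
    show "(\<lambda>n. 1 / real (Suc n)) \<longlonglongrightarrow> 0"
      using LIMSEQ_inverse_real_of_nat by (simp add: inverse_eq_divide del: of_nat_Suc)
  qed
  have Py: "(\<lambda>n. blinfun_apply P (ys n)) \<longlonglongrightarrow> 0 - l"
  proof -
    have "(\<lambda>n. blinfun_apply S (ys n) - blinfun_apply K (ys n)) \<longlonglongrightarrow> 0 - l"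
      by (rule tendsto_diff[OF Sy Ky])
    moreover have "\<And>n. blinfun_apply S (ys n) - blinfun_apply K (ys n) = blinfun_apply P (ys n)"
      using SPK by (simp add: plus_blinfun.rep_eq)
    ultimately show ?thesis by simp
  qed
  have "Cauchy ys"
    by (rule cauchy_below[OF blinfun.bounded_linear_right cP(1) Pb]) (rule LIMSEQ_imp_Cauchy[OF Py])
  then obtain x where yx: "ys \<longlonglongrightarrow> x" using convergent_eq_Cauchy by blast
  have "(\<lambda>n. norm (ys n)) \<longlonglongrightarrow> norm x" by (rule tendsto_norm[OF yx])
  moreover have "\<And>n. norm (ys n) = 1" using xs by (simp add: ys_def)
  ultimately have nx: "norm x = 1" by (simp add: LIMSEQ_const_iff)
  have "(\<lambda>n. blinfun_apply S (ys n)) \<longlonglongrightarrow> blinfun_apply S x"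
    by (rule bounded_linear.tendsto[OF blinfun.bounded_linear_right yx])
  hence "blinfun_apply S x = 0" using Sy LIMSEQ_unique by blast
  hence "x = 0" by (rule inj)
  thus False using nx by simp
qed




lemma dim_inj_image:
  fixes f :: "'a::real_vector \<Rightarrow> 'b::real_vector"
  assumes lf: "linear f" and fi: "inj_on f (span S)"
  shows "dim (f ` S) = dim S"
proof -
  obtain B where B: "B \<subseteq> S" "independent B" "S \<subseteq> span B" "card B = dim S"
    using basis_exists[of S] by auto
  then have "span S = span B"
    using span_mono[of B S] span_mono[of S "span B"] span_span[of B] by auto
  moreover have "card (f ` B) = card B"
    using assms card_image[of f B] inj_on_subset[of f "span S" B] B span_superset by auto
  moreover have "(f ` B) \<subseteq> (f ` S)"
    using B by auto
  ultimately show ?thesis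
    by (metis B(2) B(4) fi lf linear_dependent_inj_imageD span_linear_image dim_eq_card_independent dim_span)
qed

lemma fin_dim_transfer:
  fixes f :: "'a::real_vector \<Rightarrow> 'b::real_vector"
  assumes lf: "linear f" and inj: "inj f" and img: "f ` V = W" and sub: "subspace V" and fd: "fin_dim W"
  shows "fin_dim V"
proof -
  obtain B where B: "finite B" "span B = W" using fd unfolding fin_dim_def by blast
  define Bv where "Bv = {x \<in> V. f x \<in> B}"
  have fin: "finite Bv"
  proof -
    have "Bv \<subseteq> f -` B" unfolding Bv_def by auto
    moreover have "finite (f -` B)" using B(1) inj by (simp add: finite_vimageI)
    ultimately show ?thesis by (rule finite_subset)
  qed
  have s1: "span Bv \<subseteq> V" using sub by (intro span_minimal) (auto simp: Bv_def)
  have BfB: "B \<subseteq> f ` Bv"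
  proof
    fix b assume b: "b \<in> B"
    hence "b \<in> W" using B(2) span_superset by blast
    then obtain x where x: "x \<in> V" "b = f x" using img by blast
    hence "x \<in> Bv" using b by (simp add: Bv_def)
    thus "b \<in> f ` Bv" using x by blast
  qed
  have s2: "V \<subseteq> span Bv"
  proof
    fix v assume v: "v \<in> V"
    hence "f v \<in> W" using img by blast
    hence "f v \<in> span B" using B by simp
    also have "\<dots> \<subseteq> span (f ` Bv)" using BfB by (rule span_mono)
    also have "\<dots> = f ` span Bv" by (rule span_linear_image[OF lf])
    finally obtain u where u: "u \<in> span Bv" "f v = f u" by blast
    hence "v = u" using inj by (simp add: inj_eq)
    thus "v \<in> span Bv" using u by simp
  qed
  show ?thesis unfolding fin_dim_def using fin s1 s2 by blast
qed

lemma deriv_lip: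
  fixes F :: "real \<Rightarrow> 'b::real_normed_vector"
  assumes "(F has_vector_derivative F') (at x within A)"
  shows "\<exists>C. eventually (\<lambda>l. norm (F l - F x) \<le> C * \<bar>l - x\<bar>) (at x within A)"
proof -
  have "(F has_derivative (\<lambda>t. t *\<^sub>R F')) (at x within A)"
    using assms by (simp add: has_vector_derivative_def)
  hence lim: "((\<lambda>y. (1 / norm (y - x)) *\<^sub>R (F y - (F x + (y - x) *\<^sub>R F'))) \<longlongrightarrow> 0) (at x within A)"
    by (simp add: has_derivative_within)
  have ev: "eventually (\<lambda>y. dist ((1 / norm (y - x)) *\<^sub>R (F y - (F x + (y - x) *\<^sub>R F'))) 0 < 1) (at x within A)"
    using tendstoD[OF lim, of 1] by simp
  have "eventually (\<lambda>l. norm (F l - F x) \<le> (norm F' + 1) * \<bar>l - x\<bar>) (at x within A)"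
    using ev
  proof (rule eventually_mono)
    fix y assume y: "dist ((1 / norm (y - x)) *\<^sub>R (F y - (F x + (y - x) *\<^sub>R F'))) 0 < 1"
    show "norm (F y - F x) \<le> (norm F' + 1) * \<bar>y - x\<bar>"
    proof (cases "y = x")
      case True thus ?thesis by simp
    next
      case False
      hence pos: "\<bar>y - x\<bar> > 0" by simp
      have "norm (F y - (F x + (y - x) *\<^sub>R F')) / \<bar>y - x\<bar> < 1" using y by (simp add: divide_inverse_commute)
      hence a: "norm (F y - (F x + (y - x) *\<^sub>R F')) \<le> \<bar>y - x\<bar>" using pos by (simp add: field_simps)
      have "norm (F y - F x) \<le> norm (F y - (F x + (y - x) *\<^sub>R F')) + norm ((y - x) *\<^sub>R F')"
        by (rule order_trans[OF _ norm_triangle_ineq]) (simp add: algebra_simps)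
      also have "\<dots> \<le> \<bar>y - x\<bar> + \<bar>y - x\<bar> * norm F'" using a by simp
      finally show ?thesis by (simp add: algebra_simps)
    qed
  qed
  thus ?thesis by blast
qed

lemma bounded_inverse:
  fixes S :: "'a::real_normed_vector \<Rightarrow>\<^sub>L 'b::real_normed_vector"
  assumes c: "c > 0" and below: "\<And>x. c * norm x \<le> norm (blinfun_apply S x)"
    and surj: "\<And>y. \<exists>x. blinfun_apply S x = y"
  shows "bounded_invertible S"
proof -
  have inj: "inj (blinfun_apply S)"
  proof (rule injI)
    fix x y assume "blinfun_apply S x = blinfun_apply S y"
    hence "blinfun_apply S (x - y) = 0" by (simp add: blinfun.diff_right)
    hence "c * norm (x - y) \<le> 0" using below[of "x - y"] by simp
    thus "x = y" using c by (simp add: mult_le_0_iff)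
  qed
  define g where "g = inv (blinfun_apply S)"
  have Sg: "blinfun_apply S (g y) = y" for y
  proof -
    have "surj (blinfun_apply S)" unfolding surj_def using surj by (metis)
    thus ?thesis unfolding g_def by (rule surj_f_inv_f)
  qed
  have gS: "g (blinfun_apply S x) = x" for x
    unfolding g_def by (rule inv_f_f[OF inj])
  have lin_add: "g (a + b) = g a + g b" for a b
    using inj Sg by (metis (no_types) blinfun.add_right injD)
  have lin_sc: "g (r *\<^sub>R a) = r *\<^sub>R g a" for r a
    using inj Sg by (metis (no_types) blinfun.scaleR_right injD)
  have bnd: "norm (g y) \<le> norm y * (1 / c)" for y
    using below[of "g y"] c by (simp add: Sg field_simps)
  have bl: "bounded_linear g"
    by (rule bounded_linear_intro[OF lin_add lin_sc bnd])
  show ?thesis unfolding bounded_invertible_def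
    by (intro exI[of _ "Blinfun g"]) (simp add: bounded_linear_Blinfun_apply[OF bl] gS Sg)
qed




locale schur_setup =
  fixes T :: "('d1::{real_inner,complete_space},'d2::{real_inner,complete_space}) opfun"
    and zm zp ep :: real
  assumes ep: "ep > 0"
    and coer: "\<And>l y. l \<in> {zm..zp} \<Longrightarrow> frm T l (0,y) (0,y) \<le> - ep * (norm y)^2"
begin

lemma frm_bb: "bounded_bilinear (frm T l)"
proof -
  have "bounded_bilinear (\<lambda>x y. blinfun_apply (blinfun_apply (T l) x) ((\<lambda>y. y) y))"
    by (rule bounded_bilinear.comp[OF bounded_bilinear_blinfun_apply blinfun.bounded_linear_right bounded_linear_ident])
  moreover have "frm T l = (\<lambda>x y. blinfun_apply (blinfun_apply (T l) x) ((\<lambda>y. y) y))"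
    by (intro ext) (simp add: frm_def)
  ultimately show ?thesis by simp
qed

lemma frm_add_left: "frm T l (x + y) e = frm T l x e + frm T l y e"
  by (rule bounded_bilinear.add_left[OF frm_bb])
lemma frm_add_right: "frm T l e (x + y) = frm T l e x + frm T l e y"
  by (rule bounded_bilinear.add_right[OF frm_bb])
lemma frm_diff_left: "frm T l (x - y) e = frm T l x e - frm T l y e"
  by (rule bounded_bilinear.diff_left[OF frm_bb])
lemma frm_diff_right: "frm T l e (x - y) = frm T l e x - frm T l e y"
  by (rule bounded_bilinear.diff_right[OF frm_bb])
lemma frm_minus_left: "frm T l (- x) e = - frm T l x e"
  by (rule bounded_bilinear.minus_left[OF frm_bb])
lemma frm_minus_right: "frm T l e (- x) = - frm T l e x"
  by (rule bounded_bilinear.minus_right[OF frm_bb])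
lemma frm_scaleR_left: "frm T l (r *\<^sub>R x) e = r * frm T l x e"
  using bounded_bilinear.scaleR_left[OF frm_bb] by simp
lemma frm_scaleR_right: "frm T l e (r *\<^sub>R x) = r * frm T l e x"
  using bounded_bilinear.scaleR_right[OF frm_bb] by simp
lemma frm_zero_left: "frm T l 0 e = 0"
  by (rule bounded_bilinear.zero_left[OF frm_bb])
lemma frm_zero_right: "frm T l e 0 = 0"
  by (rule bounded_bilinear.zero_right[OF frm_bb])

lemma frm_bound1: "\<bar>frm T l x y\<bar> \<le> norm (blinfun_apply (T l) x) * norm y"
  unfolding frm_def using norm_blinfun[of "blinfun_apply (T l) x" y] by simp

lemma frm_bound: "\<bar>frm T l x y\<bar> \<le> norm (T l) * norm x * norm y"
proof -
  have "\<bar>frm T l x y\<bar> \<le> norm (blinfun_apply (T l) x) * norm y" by (rule frm_bound1)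
  also have "\<dots> \<le> norm (T l) * norm x * norm y" by (intro mult_right_mono norm_blinfun) simp
  finally show ?thesis .
qed

lemma pair_split: "((a::'d1), (b::'d2)) = (a, 0) + (0, b)" by simp

lemma bl_0pair: "bounded_linear (\<lambda>y::'d2. ((0::'d1), y))"
  by (rule bounded_linear_Pair[OF bounded_linear_zero bounded_linear_ident])
lemma bl_pair0: "bounded_linear (\<lambda>x::'d1. (x, (0::'d2)))"
  by (rule bounded_linear_Pair[OF bounded_linear_ident bounded_linear_zero])

lemma coer_unique:
  assumes l: "l \<in> {zm..zp}" and u: "\<And>w. frm T l (0,u) (0,w) = 0"
  shows "u = 0"
proof -
  have "- ep * (norm u)^2 \<ge> 0" using coer[OF l, of u] u[of u] by simp
  hence "(norm u)^2 \<le> 0" using ep by (simp add: mult_le_0_iff)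
  thus ?thesis by simp
qed

lemma sol_ex1:
  assumes l: "l \<in> {zm..zp}"
  shows "\<exists>!y. \<forall>w. frm T l (0,y) (0,w) = frm T l (x,0) (0,w)"
proof (rule ex_ex1I)
  have bb: "bounded_bilinear (\<lambda>y w. frm T l (0,y) (0,w))"
    by (rule bounded_bilinear.comp[OF frm_bb bl_0pair bl_0pair])
  have bl: "bounded_linear (\<lambda>w. frm T l (x,0) (0,w))"
    by (rule bounded_linear_compose[OF bounded_bilinear.bounded_linear_right[OF frm_bb] bl_0pair])
  show "\<exists>y. \<forall>w. frm T l (0,y) (0,w) = frm T l (x,0) (0,w)"
    by (rule lax_milgram_fun[OF bb ep _ bl]) (rule coer[OF l])
next
  fix y1 y2 assume h1: "\<forall>w. frm T l (0,y1) (0,w) = frm T l (x,0) (0,w)"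
    and h2: "\<forall>w. frm T l (0,y2) (0,w) = frm T l (x,0) (0,w)"
  have "\<And>w. frm T l (0, y1 - y2) (0,w) = 0"
  proof -
    fix w
    have "frm T l (0, y1 - y2) (0,w) = frm T l (0,y1) (0,w) - frm T l (0,y2) (0,w)"
      using frm_diff_left[of l "(0,y1)" "(0,y2)" "(0,w)"] by simp
    thus "frm T l (0, y1 - y2) (0,w) = 0" using h1 h2 by simp
  qed
  hence "y1 - y2 = 0" by (rule coer_unique[OF l])
  thus "y1 = y2" by simp
qed

abbreviation "sig l \<equiv> schur_sol T l"

lemma sol_eq:
  assumes l: "l \<in> {zm..zp}"
  shows "frm T l (0, sig l x) (0,w) = frm T l (x,0) (0,w)"
proof -
  have "\<forall>w. frm T l (0, sig l x) (0,w) = frm T l (x,0) (0,w)"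
    unfolding schur_sol_def by (rule theI'[OF sol_ex1[OF l]])
  thus ?thesis by blast
qed

lemma sol_unique:
  assumes l: "l \<in> {zm..zp}" and h: "\<And>w. frm T l (0,y) (0,w) = frm T l (x,0) (0,w)"
  shows "sig l x = y"
  using sol_ex1[OF l, of x] sol_eq[OF l, of x] h by blast

lemma sol_bound:
  assumes l: "l \<in> {zm..zp}"
  shows "ep * norm (sig l x) \<le> norm (T l) * norm x"
proof -
  let ?y = "sig l x"
  have "ep * (norm ?y)^2 \<le> - frm T l (0, ?y) (0, ?y)" using coer[OF l, of ?y] by simp
  also have "\<dots> = - frm T l (x,0) (0,?y)" by (simp add: sol_eq[OF l])
  also have "\<dots> \<le> norm (T l) * norm x * norm ?y" using frm_bound[of l "(x,0)" "(0,?y)"] by simp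
  finally have "ep * norm ?y * norm ?y \<le> norm (T l) * norm x * norm ?y" by (simp add: power2_eq_square)
  thus ?thesis by (cases "norm ?y = 0") (auto simp: mult_le_cancel_right intro: mult_nonneg_nonneg)
qed

lemma sol_linear:
  assumes l: "l \<in> {zm..zp}"
  shows "bounded_linear (sig l)"
proof (rule bounded_linear_intro)
  fix x y show "sig l (x + y) = sig l x + sig l y"
  proof (rule sol_unique[OF l])
    fix w
    have "frm T l (0, sig l x + sig l y) (0,w) = frm T l (0, sig l x) (0,w) + frm T l (0, sig l y) (0,w)"
      using frm_add_left[of l "(0, sig l x)" "(0, sig l y)"] by simp
    also have "\<dots> = frm T l (x,0) (0,w) + frm T l (y,0) (0,w)" by (simp add: sol_eq[OF l])
    also have "\<dots> = frm T l (x + y, 0) (0,w)" using frm_add_left[of l "(x,0)" "(y,0)"] by simp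
    finally show "frm T l (0, sig l x + sig l y) (0,w) = frm T l (x + y, 0) (0,w)" .
  qed
next
  fix r x show "sig l (r *\<^sub>R x) = r *\<^sub>R sig l x"
  proof (rule sol_unique[OF l])
    fix w
    have "frm T l (0, r *\<^sub>R sig l x) (0,w) = r * frm T l (0, sig l x) (0,w)"
      using frm_scaleR_left[of l r "(0, sig l x)"] by simp
    also have "\<dots> = r * frm T l (x,0) (0,w)" by (simp add: sol_eq[OF l])
    also have "\<dots> = frm T l (r *\<^sub>R x, 0) (0,w)" using frm_scaleR_left[of l r "(x,0)"] by simp
    finally show "frm T l (0, r *\<^sub>R sig l x) (0,w) = frm T l (r *\<^sub>R x, 0) (0,w)" .
  qed
next
  fix x show "norm (sig l x) \<le> norm x * (norm (T l) / ep)"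
    using sol_bound[OF l, of x] ep by (simp add: field_simps)
qed

lemma schur_apply:
  assumes l: "l \<in> {zm..zp}"
  shows "blinfun_apply (blinfun_apply (schur T l) x) z = frm T l (x,0) (z,0) - frm T l (0, sig l x) (z,0)"
proof -
  define g where "g = (\<lambda>x z. frm T l (x, 0) (z, 0) - frm T l (0, sig l x) (z, 0))"
  have bl1: "bounded_linear (\<lambda>x. (x, - sig l x))"
    by (rule bounded_linear_Pair[OF bounded_linear_ident bounded_linear_minus[OF sol_linear[OF l]]])
  have "g = (\<lambda>x z. frm T l (x, - sig l x) (z, 0))"
  proof (intro ext)
    fix x z
    show "g x z = frm T l (x, - sig l x) (z, 0)" unfolding g_def
      using frm_diff_left[of l "(x,0)" "(0, sig l x)" "(z,0)"] by simp
  qed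
  hence bb: "bounded_bilinear g"
    using bounded_bilinear.comp[OF frm_bb bl1 bl_pair0] by simp
  have "schur T l = Blinfun (\<lambda>x. Blinfun (g x))" unfolding schur_def g_def by simp
  hence "blinfun_apply (blinfun_apply (schur T l) x) z = g x z"
    using bounded_linear_Blinfun_apply[OF Blinfun_bilinear(1)[OF bb]] Blinfun_bilinear(2)[OF bb] by simp
  thus ?thesis unfolding g_def .
qed

end




context schur_setup begin

lemma frm00: "frm T l ((0::'d1),(0::'d2)) e = 0"
proof -
  have "((0::'d1),(0::'d2)) = 0" by (simp add: zero_prod_def)
  thus ?thesis using frm_zero_left by simp
qed

lemma frm_split_left: "frm T l (a,b) e = frm T l (a,0) e + frm T l (0,b) e"
  using frm_add_left[of l "(a,0)" "(0,b)" e] by simp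

lemma frm_split_right: "frm T l d (z,w) = frm T l d (z,0) + frm T l d (0,w)"
  using frm_add_right[of l d "(z,0)" "(0,w)"] by simp

lemma c2_eq:
  assumes l: "l \<in> {zm..zp}"
  shows "frm T l (0, b + sig l a) (0,w) = frm T l (a,b) (0,w)"
proof -
  have "frm T l (0, b + sig l a) (0,w) = frm T l (0,b) (0,w) + frm T l (0, sig l a) (0,w)"
    using frm_add_left[of l "(0,b)" "(0, sig l a)" "(0,w)"] by simp
  also have "\<dots> = frm T l (0,b) (0,w) + frm T l (a,0) (0,w)" by (simp add: sol_eq[OF l])
  also have "\<dots> = frm T l (a,b) (0,w)" using frm_split_left[of l a b "(0,w)"] by simp
  finally show ?thesis .
qed

lemma schur_apply2:
  assumes l: "l \<in> {zm..zp}"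
  shows "blinfun_apply (blinfun_apply (schur T l) a) z = frm T l (a,b) (z,0) - frm T l (0, b + sig l a) (z,0)"
proof -
  have "frm T l (0, b + sig l a) (z,0) = frm T l (0,b) (z,0) + frm T l (0, sig l a) (z,0)"
    using frm_add_left[of l "(0,b)" "(0, sig l a)" "(z,0)"] by simp
  thus ?thesis using frm_split_left[of l a b "(z,0)"] schur_apply[OF l, of a z] by simp
qed

lemma kerT_iff:
  assumes l: "l \<in> {zm..zp}"
  shows "(\<forall>e. frm T l (a,b) e = 0) \<longleftrightarrow> (schur T l a = 0 \<and> b = - sig l a)"
proof
  assume K: "\<forall>e. frm T l (a,b) e = 0"
  have c: "b + sig l a = 0"
    by (rule coer_unique[OF l]) (simp add: c2_eq[OF l] K)
  hence "blinfun_apply (blinfun_apply (schur T l) a) z = 0" for z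
    using schur_apply2[OF l, of a z b] K by (simp add: frm_zero_left frm00)
  hence "schur T l a = 0" by (intro blinfun_eqI) simp
  moreover have "b = - sig l a" using c by (simp add: eq_neg_iff_add_eq_0)
  ultimately show "schur T l a = 0 \<and> b = - sig l a" by blast
next
  assume H: "schur T l a = 0 \<and> b = - sig l a"
  show "\<forall>e. frm T l (a,b) e = 0"
  proof
    fix e :: "'d1 \<times> 'd2"
    obtain z w where e: "e = (z,w)" by (cases e)
    have "b + sig l a = 0" using H by simp
    hence 1: "frm T l (a,b) (z,0) = 0"
      using schur_apply2[OF l, of a z b] H by (simp add: frm_zero_left frm00)
    have 2: "frm T l (a,b) (0,w) = 0"
      using c2_eq[OF l, of b a w] \<open>b + sig l a = 0\<close> by (simp add: frm_zero_left frm00)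
    show "frm T l (a,b) e = 0" using frm_split_right[of l "(a,b)" z w] 1 2 e by simp
  qed
qed

lemma T_below:
  assumes l: "l \<in> {zm..zp}" and cS: "cS > 0"
    and Sb: "\<And>a. cS * norm a \<le> norm (blinfun_apply (schur T l) a)"
  shows "\<exists>c>0. \<forall>d. c * norm d \<le> norm (blinfun_apply (T l) d)"
proof -
  define K where "K = norm (T l)"
  have K0: "K \<ge> 0" by (simp add: K_def)
  define M where "M = (1 + K/ep) * (1 + K/ep) / cS + 1 / ep"
  have M0: "M > 0" unfolding M_def using ep cS K0 by (intro add_nonneg_pos) auto
  have main: "norm d \<le> M * norm (blinfun_apply (T l) d)" for d
  proof -
    obtain a b where d: "d = (a,b)" by (cases d)
    define N where "N = norm (blinfun_apply (T l) d)"
    define c2 where "c2 = b + sig l a"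
    have h1: "ep * norm c2 \<le> N"
    proof -
      have "ep * (norm c2)^2 \<le> - frm T l (0,c2) (0,c2)" using coer[OF l, of c2] by simp
      also have "\<dots> = - frm T l d (0,c2)" unfolding c2_def d by (simp add: c2_eq[OF l])
      also have "\<dots> \<le> N * norm c2" using frm_bound1[of l d "(0,c2)"] unfolding N_def by simp
      finally have "ep * norm c2 * norm c2 \<le> N * norm c2" by (simp add: power2_eq_square)
      thus ?thesis by (cases "norm c2 = 0") (auto simp: mult_le_cancel_right N_def)
    qed
    have h2: "cS * norm a \<le> N + K * norm c2"
    proof -
      have "norm (blinfun_apply (schur T l) a) \<le> N + K * norm c2"
      proof (rule norm_blinfun_bound)
        show "0 \<le> N + K * norm c2" using K0 by (simp add: N_def)
        fix z
        have "\<bar>blinfun_apply (blinfun_apply (schur T l) a) z\<bar> = \<bar>frm T l d (z,0) - frm T l (0, c2) (z,0)\<bar>"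
          using schur_apply2[OF l, of a z b] unfolding d c2_def by simp
        also have "\<dots> \<le> \<bar>frm T l d (z,0)\<bar> + \<bar>frm T l (0, c2) (z,0)\<bar>" by simp
        also have "\<dots> \<le> N * norm z + K * norm c2 * norm z"
          using frm_bound1[of l d "(z,0)"] frm_bound[of l "(0,c2)" "(z,0)"] unfolding N_def K_def
          by (intro add_mono) auto
        finally show "norm (blinfun_apply (blinfun_apply (schur T l) a) z) \<le> (N + K * norm c2) * norm z"
          by (simp add: algebra_simps)
      qed
      thus ?thesis using Sb[of a] by linarith
    qed
    have h3: "ep * norm (sig l a) \<le> K * norm a" using sol_bound[OF l, of a] unfolding K_def .
    have h4: "norm b \<le> norm c2 + norm (sig l a)"
    proof -
      have "b = c2 - sig l a" by (simp add: c2_def)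
      thus ?thesis using norm_triangle_ineq4[of c2 "sig l a"] by simp
    qed
    have h5: "norm d \<le> norm a + norm b" unfolding d by (rule norm_Pair_le)
    have N0: "N \<ge> 0" by (simp add: N_def)
    have c2b: "norm c2 \<le> N / ep" using h1 ep by (simp add: field_simps)
    have ab: "norm a \<le> N * (1 + K/ep) / cS"
    proof -
      have "K * norm c2 \<le> K * (N / ep)" using c2b K0 by (rule mult_left_mono)
      hence "cS * norm a \<le> N * (1 + K/ep)" using h2 by (simp add: algebra_simps)
      thus ?thesis using cS by (simp add: field_simps)
    qed
    have sb: "norm (sig l a) \<le> K / ep * norm a" using h3 ep by (simp add: field_simps)
    have "norm d \<le> (1 + K/ep) * norm a + N / ep" using h4 h5 c2b sb by (simp add: algebra_simps)
    also have "\<dots> \<le> (1 + K/ep) * (N * (1 + K/ep) / cS) + N / ep"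
      using ab K0 ep by (intro add_right_mono mult_left_mono) auto
    also have "\<dots> = M * N" unfolding M_def by (simp add: field_simps)
    finally show ?thesis unfolding N_def .
  qed
  show ?thesis
  proof (intro exI[of _ "1/M"] conjI allI)
    show "1/M > 0" using M0 by simp
    fix d show "1 / M * norm d \<le> norm (blinfun_apply (T l) d)" using main[of d] M0 by (simp add: field_simps)
  qed
qed

lemma S_surj:
  assumes l: "l \<in> {zm..zp}" and Ts: "\<And>f. \<exists>d. blinfun_apply (T l) d = f"
  shows "\<exists>a. blinfun_apply (schur T l) a = g"
proof -
  define f where "f = Blinfun (\<lambda>e::'d1\<times>'d2. blinfun_apply g (fst e))"
  have blf: "bounded_linear (\<lambda>e::'d1\<times>'d2. blinfun_apply g (fst e))"
    by (rule bounded_linear_compose[OF blinfun.bounded_linear_right bounded_linear_fst])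
  obtain d where dT: "blinfun_apply (T l) d = f" using Ts by blast
  obtain a b where d: "d = (a,b)" by (cases d)
  have fe: "frm T l d e = blinfun_apply g (fst e)" for e
    unfolding frm_def dT f_def bounded_linear_Blinfun_apply[OF blf] by simp
  have c0: "b + sig l a = 0"
    by (rule coer_unique[OF l]) (simp add: c2_eq[OF l] fe[unfolded d] blinfun.zero_right)
  have "blinfun_apply (blinfun_apply (schur T l) a) z = blinfun_apply g z" for z
    using schur_apply2[OF l, of a z b] c0 fe[of "(z,0)"] d by (simp add: frm_zero_left frm00)
  hence "blinfun_apply (schur T l) a = g" by (intro blinfun_eqI) simp
  thus ?thesis by blast
qed

end




locale schur_emb = schur_setup T zm zp ep
  for T :: "('d1::{real_inner,complete_space},'d2::{real_inner,complete_space}) opfun" and zm zp ep +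
  fixes I1 :: "'d1 \<Rightarrow>\<^sub>L 'h1::{real_inner,complete_space}"
    and I2 :: "'d2 \<Rightarrow>\<^sub>L 'h2::{real_inner,complete_space}"
  assumes inj1: "inj (blinfun_apply I1)" and dense1: "closure (range (blinfun_apply I1)) = UNIV"
    and inj2: "inj (blinfun_apply I2)" and dense2: "closure (range (blinfun_apply I2)) = UNIV"
begin

abbreviation "E \<equiv> embI I1 I2"

lemma E_eq: "E = (\<lambda>d. (blinfun_apply I1 (fst d), blinfun_apply I2 (snd d)))"
  by (intro ext) (simp add: embI_def)

lemma E_bl: "bounded_linear E"
  unfolding E_eq
  by (intro bounded_linear_Pair bounded_linear_compose[OF blinfun.bounded_linear_right bounded_linear_fst]
      bounded_linear_compose[OF blinfun.bounded_linear_right bounded_linear_snd])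

lemma E_inj: "inj E"
proof (rule injI)
  fix x y assume "E x = E y"
  hence "blinfun_apply I1 (fst x) = blinfun_apply I1 (fst y)" "blinfun_apply I2 (snd x) = blinfun_apply I2 (snd y)"
    by (simp_all add: embI_def)
  hence "fst x = fst y" "snd x = snd y" using injD[OF inj1] injD[OF inj2] by blast+
  thus "x = y" by (simp add: prod_eq_iff)
qed

lemma E_dense: "closure (range E) = UNIV"
proof -
  have "range E = range (blinfun_apply I1) \<times> range (blinfun_apply I2)"
  proof (intro set_eqI iffI)
    fix p assume "p \<in> range E"
    then obtain d where "p = E d" by blast
    thus "p \<in> range (blinfun_apply I1) \<times> range (blinfun_apply I2)" by (simp add: embI_def)
  next
    fix p assume "p \<in> range (blinfun_apply I1) \<times> range (blinfun_apply I2)"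
    then obtain a b where "p = (blinfun_apply I1 a, blinfun_apply I2 b)" by blast
    hence "p = E (a,b)" by (simp add: embI_def)
    thus "p \<in> range E" by (rule image_eqI) simp
  qed
  thus ?thesis by (simp add: closure_Times dense1 dense2)
qed

lemma E_orth: "(\<And>e. inner z (E e) = 0) \<Longrightarrow> z = 0"
  by (rule orth_dense_zero[OF E_dense])

definition "DomP l d \<longleftrightarrow> (\<exists>h. \<forall>e. frm T l d e = inner h (E e))"

lemma bul_E:
  assumes h: "\<And>e. frm T l d e = inner h (E e)"
  shows "bul T I1 I2 l (E d) = h"
proof -
  have inv: "inv E (E d) = d" by (rule inv_f_f[OF E_inj])
  show ?thesis unfolding bul_def inv
  proof (rule the_equality)
    show "\<forall>e. frm T l d e = inner h (E e)" using h by blast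
  next
    fix h' assume h': "\<forall>e. frm T l d e = inner h' (E e)"
    have "\<And>e. inner (h' - h) (E e) = 0" using h h' by (simp add: inner_diff_left)
    hence "h' - h = 0" by (rule E_orth)
    thus "h' = h" by simp
  qed
qed

lemma bul_dom_iff: "x \<in> bul_dom T I1 I2 l \<longleftrightarrow> (\<exists>d. x = E d \<and> DomP l d)"
  unfolding bul_dom_def DomP_def by simp

lemma bul_ker_iff: "x \<in> bul_ker T I1 I2 l \<longleftrightarrow> (\<exists>d. x = E d \<and> (\<forall>e. frm T l d e = 0))"
proof
  assume "x \<in> bul_ker T I1 I2 l"
  hence x: "x \<in> bul_dom T I1 I2 l" "bul T I1 I2 l x = 0" unfolding bul_ker_def by auto
  then obtain d h where d: "x = E d" "\<And>e. frm T l d e = inner h (E e)" unfolding bul_dom_iff DomP_def by blast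
  have "h = 0" using bul_E[OF d(2)] x(2) d(1) by simp
  hence "\<forall>e. frm T l d e = 0" using d(2) by simp
  thus "\<exists>d. x = E d \<and> (\<forall>e. frm T l d e = 0)" using d(1) by blast
next
  assume "\<exists>d. x = E d \<and> (\<forall>e. frm T l d e = 0)"
  then obtain d where d: "x = E d" "\<And>e. frm T l d e = 0" by blast
  have h0: "\<And>e. frm T l d e = inner 0 (E e)" using d by simp
  have "x \<in> bul_dom T I1 I2 l" unfolding bul_dom_iff DomP_def using d(1) h0 by blast
  moreover have "bul T I1 I2 l x = 0" using bul_E[OF h0] d(1) by simp
  ultimately show "x \<in> bul_ker T I1 I2 l" unfolding bul_ker_def by simp
qed

end




lemma div_helper: "(c::real) > 0 \<Longrightarrow> c * x \<le> q \<Longrightarrow> x \<le> 1 / c * q"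
  by (simp add: field_simps)

context schur_emb begin

lemma res_main:
  assumes l: "l \<in> {zm..zp}" and res: "zero_in_resolvent (bul_dom T I1 I2 l) (bul T I1 I2 l)"
    and sa: "selfadjoint_op (bul_dom T I1 I2 l) (bul T I1 I2 l)"
    and dec: "\<exists>P K. schur T l = P + K \<and> uniformly_positive P \<and> compact_operator K"
  shows "bounded_invertible (schur T l) \<and> (\<forall>d e. frm T l d e = frm T l e d)"
proof -
  obtain R :: "('h1 \<times> 'h2) \<Rightarrow>\<^sub>L ('h1 \<times> 'h2)" where
    R1: "\<And>h. blinfun_apply R h \<in> bul_dom T I1 I2 l" and R2: "\<And>h. bul T I1 I2 l (blinfun_apply R h) = h"
    and R3: "\<And>x. x \<in> bul_dom T I1 I2 l \<Longrightarrow> blinfun_apply R (bul T I1 I2 l x) = x"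
    using res unfolding zero_in_resolvent_def by blast
  have Tinj: "d = 0" if K: "\<And>e. frm T l d e = 0" for d
  proof -
    have h0: "\<And>e. frm T l d e = inner 0 (E e)" using K by simp
    have dom: "E d \<in> bul_dom T I1 I2 l" unfolding bul_dom_iff DomP_def using h0 by blast
    have "bul T I1 I2 l (E d) = 0" by (rule bul_E[OF h0])
    hence "E d = blinfun_apply R 0" using R3[OF dom] by simp
    hence "E d = E 0" by (simp add: linear_0[OF bounded_linear.linear[OF E_bl]])
    thus "d = 0" by (rule injD[OF E_inj])
  qed
  have Rsol: "\<exists>d. \<forall>e. frm T l d e = inner h (E e)" for h
  proof -
    obtain d h' where d: "blinfun_apply R h = E d" "\<And>e. frm T l d e = inner h' (E e)"
      using R1[of h] unfolding bul_dom_iff DomP_def by blast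
    have "h' = h" using bul_E[OF d(2)] R2[of h] d(1) by simp
    thus ?thesis using d(2) by blast
  qed
  have Sinj: "a = 0" if "blinfun_apply (schur T l) a = 0" for a
  proof -
    have "\<forall>e. frm T l (a, - sig l a) e = 0" using kerT_iff[OF l] that by simp
    hence "(a, - sig l a) = 0" using Tinj by blast
    thus ?thesis by (simp add: zero_prod_def)
  qed
  obtain P K where PK: "schur T l = P + K" "uniformly_positive P" "compact_operator K" using dec by blast
  obtain cS where cS: "cS > 0" "\<And>x. cS * norm x \<le> norm (blinfun_apply (schur T l) x)"
    using fredholm_below[OF PK Sinj] by blast
  obtain c where c: "c > 0" "\<And>d. c * norm d \<le> norm (blinfun_apply (T l) d)"
    using T_below[OF l cS] by blast
  have approx: "\<exists>d. DomP l d \<and> norm (blinfun_apply (T l) d - f) \<le> \<eta>" if eta: "\<eta> > 0" for f \<eta>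
  proof -
    obtain h where h: "\<And>e. \<bar>blinfun_apply f e - inner h (E e)\<bar> \<le> \<eta> * norm e"
      using dual_density[OF E_bl E_inj blinfun.bounded_linear_right eta, of f] by blast
    obtain d where d: "\<And>e. frm T l d e = inner h (E e)" using Rsol by blast
    have "norm (blinfun_apply (T l) d - f) \<le> \<eta>"
    proof (rule norm_blinfun_bound)
      show "0 \<le> \<eta>" using eta by simp
      fix e
      have "blinfun_apply (blinfun_apply (T l) d - f) e = inner h (E e) - blinfun_apply f e"
        using d[of e] by (simp add: frm_def minus_blinfun.rep_eq)
      thus "norm (blinfun_apply (blinfun_apply (T l) d - f) e) \<le> \<eta> * norm e" using h[of e] by simp
    qed
    moreover have "DomP l d" unfolding DomP_def using d by blast
    ultimately show ?thesis by blast
  qed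
  have Tsurj: "\<exists>d. blinfun_apply (T l) d = f" for f
  proof -
    have cl: "closed (range (blinfun_apply (T l)))"
      by (rule bounded_below_closed_range[OF blinfun.bounded_linear_right c(1) c(2)])
    have "\<forall>e>0. \<exists>y\<in>range (blinfun_apply (T l)). dist y f < e"
    proof (intro allI impI)
      fix e :: real assume e: "e > 0"
      obtain d where "norm (blinfun_apply (T l) d - f) \<le> e/2" using approx[of "e/2" f] e by auto
      hence "dist (blinfun_apply (T l) d) f < e" using e by (simp add: dist_norm)
      thus "\<exists>y\<in>range (blinfun_apply (T l)). dist y f < e" by blast
    qed
    hence "f \<in> range (blinfun_apply (T l))" using closed_approachable[OF cl] by blast
    thus ?thesis by auto
  qed
  have inv: "bounded_invertible (schur T l)"
    by (rule bounded_inverse[OF cS]) (rule S_surj[OF l Tsurj])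
  have symD: "frm T l d1 d2 = frm T l d2 d1" if D1: "DomP l d1" and D2: "DomP l d2" for d1 d2
  proof -
    obtain h1 where h1: "\<And>e. frm T l d1 e = inner h1 (E e)" using D1 unfolding DomP_def by blast
    obtain h2 where h2: "\<And>e. frm T l d2 e = inner h2 (E e)" using D2 unfolding DomP_def by blast
    have m1: "E d1 \<in> bul_dom T I1 I2 l" unfolding bul_dom_iff using D1 by blast
    have m2: "E d2 \<in> bul_dom T I1 I2 l" unfolding bul_dom_iff using D2 by blast
    have symm: "\<forall>x\<in>bul_dom T I1 I2 l. \<forall>y\<in>bul_dom T I1 I2 l. inner (bul T I1 I2 l x) y = inner x (bul T I1 I2 l y)"
      using sa unfolding selfadjoint_op_def by blast
    have "frm T l d1 d2 = inner (bul T I1 I2 l (E d1)) (E d2)" by (simp add: h1 bul_E[OF h1])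
    also have "\<dots> = inner (E d1) (bul T I1 I2 l (E d2))" using symm m1 m2 by blast
    also have "\<dots> = frm T l d2 d1" by (simp add: h2 bul_E[OF h2] inner_commute)
    finally show ?thesis .
  qed
  have seq: "\<exists>s. (\<forall>n. DomP l (s n)) \<and> s \<longlonglongrightarrow> d" for d
  proof -
    have "\<exists>d'. DomP l d' \<and> norm (d' - d) \<le> 1 / c * (1 / real (Suc n))" for n
    proof -
      obtain d' where d': "DomP l d'" "norm (blinfun_apply (T l) d' - blinfun_apply (T l) d) \<le> 1 / real (Suc n)"
        using approx[of "1 / real (Suc n)" "blinfun_apply (T l) d"] by auto
      have "c * norm (d' - d) \<le> 1 / real (Suc n)"
        using c(2)[of "d' - d"] d'(2) by (simp add: blinfun.diff_right)
      hence "norm (d' - d) \<le> 1 / c * (1 / real (Suc n))" by (rule div_helper[OF c(1)])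
      thus ?thesis using d'(1) by blast
    qed
    hence "\<forall>n. \<exists>d'. DomP l d' \<and> norm (d' - d) \<le> 1 / c * (1 / real (Suc n))" by blast
    from choice[OF this] obtain s where s: "\<forall>n. DomP l (s n) \<and> norm (s n - d) \<le> 1 / c * (1 / real (Suc n))"
      by blast
    have "(\<lambda>n. s n - d) \<longlonglongrightarrow> 0"
    proof (rule Lim_null_comparison)
      show "\<forall>\<^sub>F n in sequentially. norm (s n - d) \<le> 1 / c * (1 / real (Suc n))"
        using s by (simp add: always_eventually)
      have "(\<lambda>n. 1 / real (Suc n)) \<longlonglongrightarrow> 0"
        using LIMSEQ_inverse_real_of_nat by (simp add: inverse_eq_divide del: of_nat_Suc)
      from tendsto_mult[OF tendsto_const this, of "1/c"]
      show "(\<lambda>n. 1 / c * (1 / real (Suc n))) \<longlonglongrightarrow> 0" by simp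
    qed
    hence "(\<lambda>n. (s n - d) + d) \<longlonglongrightarrow> 0 + d" by (intro tendsto_add tendsto_const)
    hence "s \<longlonglongrightarrow> d" by simp
    thus ?thesis using s by blast
  qed
  have sym: "frm T l d e = frm T l e d" for d e
  proof -
    obtain s where s: "\<forall>n. DomP l (s n)" "s \<longlonglongrightarrow> d" using seq by blast
    obtain t where t: "\<forall>n. DomP l (t n)" "t \<longlonglongrightarrow> e" using seq by blast
    have 1: "(\<lambda>n. frm T l (s n) (t n)) \<longlonglongrightarrow> frm T l d e"
      by (rule bounded_bilinear.tendsto[OF frm_bb s(2) t(2)])
    have 2: "(\<lambda>n. frm T l (t n) (s n)) \<longlonglongrightarrow> frm T l e d"
      by (rule bounded_bilinear.tendsto[OF frm_bb t(2) s(2)])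
    have "(\<lambda>n. frm T l (s n) (t n)) = (\<lambda>n. frm T l (t n) (s n))"
      using symD s(1) t(1) by auto
    thus ?thesis using 1 2 LIMSEQ_unique by metis
  qed
  show ?thesis using inv sym by blast
qed

end




context schur_setup begin

lemma key_bound:
  assumes l: "l \<in> {zm..zp}" and mu: "mu \<in> {zm..zp}"
    and sym: "\<And>d e. frm T l d e = frm T l e d"
  shows "ep * \<bar>blinfun_apply (blinfun_apply (schur T l) y1) y1 - frm T l (y1, - sig mu y1) (y1, - sig mu y1)\<bar>
         \<le> (norm (blinfun_apply (T l) (y1, - sig mu y1)))^2"
proof -
  define d where "d = (y1, - sig mu y1)"
  define el where "el = (y1, - sig l y1)"
  define u where "u = sig mu y1 - sig l y1"
  define N where "N = norm (blinfun_apply (T l) d)"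
  define f where "f = blinfun_apply (blinfun_apply (schur T l) y1) y1"
  have A: "f = frm T l el (y1,0)"
    using schur_apply2[OF l, of y1 y1 "- sig l y1"] unfolding f_def el_def by (simp add: frm00)
  have B: "frm T l el (0,w) = 0" for w
    using c2_eq[OF l, of "- sig l y1" y1 w] unfolding el_def by (simp add: frm00)
  have C: "frm T l el d = f"
    using frm_split_right[of l el y1 "- sig mu y1"] A B unfolding d_def by simp
  have D: "el - d = (0, u)" unfolding el_def d_def u_def by simp
  have phi: "f - frm T l d d = frm T l d (0,u)"
  proof -
    have "f - frm T l d d = frm T l (el - d) d" using C by (simp add: frm_diff_left)
    also have "\<dots> = frm T l d (0,u)" using D sym by simp
    finally show ?thesis .
  qed
  have Eq: "frm T l (0,u) (0,u) = - frm T l d (0,u)"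
  proof -
    have "frm T l (0,u) (0,u) = frm T l el (0,u) - frm T l d (0,u)" using D[symmetric] by (simp add: frm_diff_left)
    thus ?thesis using B by simp
  qed
  have N0: "N \<ge> 0" by (simp add: N_def)
  have bu: "\<bar>frm T l d (0,u)\<bar> \<le> N * norm u" using frm_bound1[of l d "(0,u)"] unfolding N_def by simp
  have eu: "ep * norm u \<le> N"
  proof -
    have "ep * (norm u)^2 \<le> - frm T l (0,u) (0,u)" using coer[OF l, of u] by simp
    also have "\<dots> \<le> N * norm u" using Eq bu by simp
    finally have "ep * norm u * norm u \<le> N * norm u" by (simp add: power2_eq_square)
    thus ?thesis using N0 by (cases "norm u = 0") (auto simp: mult_le_cancel_right)
  qed
  have "ep * \<bar>f - frm T l d d\<bar> \<le> ep * (N * norm u)" using phi bu ep by simp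
  also have "\<dots> = N * (ep * norm u)" by simp
  also have "\<dots> \<le> N * N" using eu N0 by (rule mult_left_mono)
  finally show ?thesis unfolding f_def N_def d_def by (simp add: power2_eq_square)
qed

end




context schur_setup begin

lemma neg_deriv:
  assumes J: "J \<subseteq> {zm..zp}" and muJ: "mu \<in> J" and mu: "mu \<in> {zm..zp}"
    and e0: "e0 > 0"
    and symm: "\<And>l d e. l \<in> {zm..zp} \<Longrightarrow> l \<noteq> mu \<Longrightarrow> \<bar>l - mu\<bar> < e0 \<Longrightarrow> frm T l d e = frm T l e d"
    and smooth: "strongly_smooth_on {zm..zp} T"
    and ky: "schur T mu y1 = 0"
    and gder: "((\<lambda>l. frm T l (y1, - sig mu y1) (y1, - sig mu y1)) has_real_derivative D) (at mu within J)"
  shows "((\<lambda>l. blinfun_apply (blinfun_apply (schur T l) y1) y1) has_real_derivative D) (at mu within J)"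
proof -
  define d where "d = (y1, - sig mu y1)"
  define g where "g = (\<lambda>l. frm T l d d)"
  define f where "f = (\<lambda>l. blinfun_apply (blinfun_apply (schur T l) y1) y1)"
  define phi where "phi = (\<lambda>l. f l - g l)"
  have Tmu: "blinfun_apply (T mu) d = 0"
  proof -
    have "\<forall>e. frm T mu d e = 0" unfolding d_def using kerT_iff[OF mu] ky by simp
    hence "\<And>e. blinfun_apply (blinfun_apply (T mu) d) e = 0" unfolding frm_def by blast
    thus ?thesis by (intro blinfun_eqI) simp
  qed
  obtain F where F: "F 0 = (\<lambda>l. blinfun_apply (T l) d)"
    "\<And>n t. t \<in> {zm..zp} \<Longrightarrow> (F n has_vector_derivative F (Suc n) t) (at t within {zm..zp})"
    using smooth unfolding strongly_smooth_on_def smooth_on_def by blast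
  have "((\<lambda>l. blinfun_apply (T l) d) has_vector_derivative F 1 mu) (at mu within {zm..zp})"
    using F(2)[OF mu, of 0] F(1) by simp
  then obtain C where C: "eventually (\<lambda>l. norm (blinfun_apply (T l) d - blinfun_apply (T mu) d) \<le> C * \<bar>l - mu\<bar>) (at mu within {zm..zp})"
    using deriv_lip by blast
  have CJ: "eventually (\<lambda>l. norm (blinfun_apply (T l) d) \<le> C * \<bar>l - mu\<bar>) (at mu within J)"
    using filter_leD[OF at_le[OF J] C] Tmu by simp
  have EJ: "eventually (\<lambda>l. l \<in> J \<and> l \<noteq> mu \<and> \<bar>l - mu\<bar> < e0) (at mu within J)"
    unfolding eventually_at using e0 by (intro exI[of _ e0]) (auto simp: dist_real_def)
  have bnd: "eventually (\<lambda>l. norm ((phi l - phi mu) / (l - mu)) \<le> (C^2 / ep) * \<bar>l - mu\<bar>) (at mu within J)"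
    using CJ EJ
  proof (rule eventually_elim2)
    fix l assume c1: "norm (blinfun_apply (T l) d) \<le> C * \<bar>l - mu\<bar>" and c2: "l \<in> J \<and> l \<noteq> mu \<and> \<bar>l - mu\<bar> < e0"
    have l: "l \<in> {zm..zp}" using c2 J by blast
    have phimu: "phi mu = 0"
    proof -
      have "f mu = 0" unfolding f_def using ky by simp
      moreover have "g mu = 0" unfolding g_def using Tmu by (simp add: frm_def)
      ultimately show ?thesis by (simp add: phi_def)
    qed
    have kb: "ep * \<bar>phi l\<bar> \<le> (norm (blinfun_apply (T l) d))^2"
      using key_bound[OF l mu symm[OF l]] c2 unfolding phi_def f_def g_def d_def by simp
    have "(norm (blinfun_apply (T l) d))^2 \<le> (C * \<bar>l - mu\<bar>)^2"
      using c1 by (intro power_mono) auto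
    also have "(C * \<bar>l - mu\<bar>)^2 = C^2 * \<bar>l - mu\<bar> * \<bar>l - mu\<bar>" by (simp add: power2_eq_square)
    finally have "ep * \<bar>phi l\<bar> \<le> C^2 * \<bar>l - mu\<bar> * \<bar>l - mu\<bar>" using kb by linarith
    hence "\<bar>phi l\<bar> \<le> C^2 / ep * \<bar>l - mu\<bar> * \<bar>l - mu\<bar>" using ep by (simp add: field_simps)
    moreover have "\<bar>l - mu\<bar> > 0" using c2 by simp
    ultimately have "\<bar>phi l\<bar> / \<bar>l - mu\<bar> \<le> C^2 / ep * \<bar>l - mu\<bar>" by (simp add: divide_le_eq)
    thus "norm ((phi l - phi mu) / (l - mu)) \<le> (C^2 / ep) * \<bar>l - mu\<bar>" by (simp add: phimu abs_divide)
  qed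
  have lim0: "((\<lambda>l. (C^2 / ep) * \<bar>l - mu\<bar>) \<longlongrightarrow> 0) (at mu within J)"
  proof -
    have "((\<lambda>l. (C^2 / ep) * \<bar>l - mu\<bar>) \<longlongrightarrow> (C^2 / ep) * \<bar>mu - mu\<bar>) (at mu within J)"
      by (intro tendsto_intros)
    thus ?thesis by simp
  qed
  have "((\<lambda>l. (phi l - phi mu) / (l - mu)) \<longlongrightarrow> 0) (at mu within J)"
    by (rule Lim_null_comparison[OF bnd lim0])
  hence pd: "(phi has_real_derivative 0) (at mu within J)" by (simp add: has_field_derivative_iff)
  have gd: "(g has_real_derivative D) (at mu within J)" using gder unfolding g_def d_def .
  have "((\<lambda>l. g l + phi l) has_real_derivative D + 0) (at mu within J)" by (rule DERIV_add[OF gd pd])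
  moreover have "(\<lambda>l. g l + phi l) = f" by (intro ext) (simp add: phi_def)
  ultimately show ?thesis unfolding f_def by simp
qed

end




context schur_emb begin

lemma sig_linear: "l \<in> {zm..zp} \<Longrightarrow> linear (sig l)"
  using sol_linear bounded_linear.linear by blast

lemma main_result:
  assumes mu: "mu \<in> {zm<..<zp}"
    and smooth: "strongly_smooth_on {zm..zp} T"
    and sa: "\<forall>l\<in>{zm..zp}. selfadjoint_op (bul_dom T I1 I2 l) (bul T I1 I2 l)"
    and dec: "\<forall>l\<in>{zm..zp}. \<exists>P K. schur T l = P + K \<and> uniformly_positive P \<and> compact_operator K"
    and iso: "bul_isolated_eigenvalue zm zp T I1 I2 mu"
    and fd: "fin_dim (bul_ker T I1 I2 mu)"
    and neg: "bul_negative_type zm zp T I1 I2 mu"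
  shows "op_isolated_eigenvalue zm zp (schur T) mu \<and> op_negative_type zm zp (schur T) mu
         \<and> fin_dim (op_ker (schur T mu)) \<and> dim (op_ker (schur T mu)) = dim (bul_ker T I1 I2 mu)"
proof -
  have muI: "mu \<in> {zm..zp}" using mu by auto
  obtain e0 where e0: "e0 > 0" and res: "\<And>l. l \<in> {zm..zp} \<Longrightarrow> l \<noteq> mu \<Longrightarrow> \<bar>l - mu\<bar> < e0 \<Longrightarrow>
      zero_in_resolvent (bul_dom T I1 I2 l) (bul T I1 I2 l)"
    using iso unfolding bul_isolated_eigenvalue_def by blast
  have near: "bounded_invertible (schur T l) \<and> (\<forall>d e. frm T l d e = frm T l e d)"
    if l: "l \<in> {zm..zp}" "l \<noteq> mu" "\<bar>l - mu\<bar> < e0" for l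
    using res_main[OF l(1) res[OF l] sa[rule_format, OF l(1)] dec[rule_format, OF l(1)]] .
  define chi where "chi = (\<lambda>x. E (x, - sig mu x))"
  have chi_bl: "bounded_linear chi"
    unfolding chi_def
    by (rule bounded_linear_compose[OF E_bl bounded_linear_Pair[OF bounded_linear_ident bounded_linear_minus[OF sol_linear[OF muI]]]])
  have chi_lin: "linear chi" using chi_bl bounded_linear.linear by blast
  have chi_inj: "inj chi"
  proof (rule injI)
    fix x y assume "chi x = chi y"
    hence "(x, - sig mu x) = (y, - sig mu y)" unfolding chi_def by (rule injD[OF E_inj])
    thus "x = y" by simp
  qed
  have kerS_iff: "x \<in> op_ker (schur T mu) \<longleftrightarrow> schur T mu x = 0" for x
    unfolding op_ker_def by simp
  have img: "chi ` op_ker (schur T mu) = bul_ker T I1 I2 mu"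
  proof (intro set_eqI iffI)
    fix x assume "x \<in> chi ` op_ker (schur T mu)"
    then obtain y where y0: "y \<in> op_ker (schur T mu)" and y2: "x = chi y" by blast
    have y: "schur T mu y = 0" "x = chi y" using y0 y2 kerS_iff by auto
    have "\<forall>e. frm T mu (y, - sig mu y) e = 0" using kerT_iff[OF muI] y(1) by simp
    thus "x \<in> bul_ker T I1 I2 mu" unfolding bul_ker_iff y(2) chi_def by blast
  next
    fix x assume "x \<in> bul_ker T I1 I2 mu"
    then obtain d where d: "x = E d" "\<forall>e. frm T mu d e = 0" unfolding bul_ker_iff by blast
    obtain a b where ab: "d = (a,b)" by (cases d)
    have "schur T mu a = 0 \<and> b = - sig mu a" using kerT_iff[OF muI] d(2) ab by simp
    hence "a \<in> op_ker (schur T mu)" "x = chi a" using d(1) ab unfolding kerS_iff chi_def by auto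
    thus "x \<in> chi ` op_ker (schur T mu)" by blast
  qed
  have sub: "subspace (op_ker (schur T mu))"
    unfolding subspace_def op_ker_def
    by (simp add: blinfun.add_right blinfun.scaleR_right)
  have fdS: "fin_dim (op_ker (schur T mu))"
    by (rule fin_dim_transfer[OF chi_lin chi_inj img sub fd])
  have dimS: "dim (op_ker (schur T mu)) = dim (bul_ker T I1 I2 mu)"
    using dim_inj_image[OF chi_lin, of "op_ker (schur T mu)"] chi_inj img
    by (simp add: inj_on_subset[OF chi_inj])
  have ne: "op_ker (schur T mu) \<noteq> {0}"
  proof
    assume z: "op_ker (schur T mu) = {0}"
    hence "bul_ker T I1 I2 mu = {chi 0}" using img by simp
    moreover have "chi 0 = 0" using linear_0[OF chi_lin] .
    ultimately show False using iso unfolding bul_isolated_eigenvalue_def by simp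
  qed
  have isoS: "op_isolated_eigenvalue zm zp (schur T) mu"
    unfolding op_isolated_eigenvalue_def using ne e0 near by blast
  have negS: "op_negative_type zm zp (schur T) mu"
    unfolding op_negative_type_def
  proof (intro ballI impI)
    fix y1 assume y1: "y1 \<in> op_ker (schur T mu)" and y10: "y1 \<noteq> 0"
    define d where "d = (y1, - sig mu y1)"
    have xk: "chi y1 \<in> bul_ker T I1 I2 mu" using img y1 by blast
    have x0: "chi y1 \<noteq> 0"
    proof
      assume "chi y1 = 0"
      hence "chi y1 = chi 0" using linear_0[OF chi_lin] by simp
      thus False using injD[OF chi_inj] y10 by blast
    qed
    obtain J D where J: "is_interval J" "mu \<in> J" "J \<subseteq> {zm..zp}" "J \<noteq> {mu}"
      and Jdom: "\<forall>l\<in>J. chi y1 \<in> bul_dom T I1 I2 l"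
      and D: "D < 0" "((\<lambda>l. inner (bul T I1 I2 l (chi y1)) (chi y1)) has_real_derivative D) (at mu within J)"
      using neg xk x0 unfolding bul_negative_type_def by blast
    have geq: "inner (bul T I1 I2 l (chi y1)) (chi y1) = frm T l d d" if l: "l \<in> J" for l
    proof -
      obtain d' where d': "chi y1 = E d'" "DomP l d'" using Jdom l unfolding bul_dom_iff by blast
      have "d' = d" using d'(1) unfolding chi_def d_def by (rule injD[OF E_inj, symmetric])
      then obtain h where h: "\<And>e. frm T l d e = inner h (E e)" using d'(2) unfolding DomP_def by blast
      have "bul T I1 I2 l (chi y1) = h" unfolding chi_def d_def[symmetric] by (rule bul_E[OF h])
      thus ?thesis using h[of d] unfolding chi_def d_def by simp
    qed
    have gder: "((\<lambda>l. frm T l d d) has_real_derivative D) (at mu within J)"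
      by (rule has_field_derivative_transform_within[OF D(2) zero_less_one J(2)]) (simp add: geq)
    have ky: "schur T mu y1 = 0" using y1 unfolding kerS_iff .
    have symm: "\<And>l d e. l \<in> {zm..zp} \<Longrightarrow> l \<noteq> mu \<Longrightarrow> \<bar>l - mu\<bar> < e0 \<Longrightarrow> frm T l d e = frm T l e d"
      using near by blast
    have "((\<lambda>l. blinfun_apply (blinfun_apply (schur T l) y1) y1) has_real_derivative D) (at mu within J)"
      by (rule neg_deriv[OF J(3) J(2) muI e0 symm smooth ky gder[unfolded d_def]])
    thus "\<exists>J. is_interval J \<and> mu \<in> J \<and> J \<subseteq> {zm..zp} \<and> J \<noteq> {mu} \<and>
             (\<exists>d<0. ((\<lambda>l. blinfun_apply (blinfun_apply (schur T l) y1) y1) has_real_derivative d) (at mu within J))"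
      using J D(1) by blast
  qed
  show ?thesis using isoS negS fdS dimS by blast
qed

end


theorem mainTheorem15:
  fixes zm zp :: real
    and I1 :: "'d1::{real_inner,complete_space} \<Rightarrow>\<^sub>L 'h1::{real_inner,complete_space}"
    and I2 :: "'d2::{real_inner,complete_space} \<Rightarrow>\<^sub>L 'h2::{real_inner,complete_space}"
    and T :: "('d1,'d2) opfun"
    and mu :: real
  assumes "zm < zp"
    and "inj (blinfun_apply I1)" and "closure (range (blinfun_apply I1)) = UNIV"
    and "inj (blinfun_apply I2)" and "closure (range (blinfun_apply I2)) = UNIV"
    and "strongly_smooth_on {zm..zp} T"
    and "\<forall>l\<in>{zm..zp}. selfadjoint_op (bul_dom T I1 I2 l) (bul T I1 I2 l)"
    and "\<exists>\<epsilon>>0. \<forall>l\<in>{zm..zp}. \<forall>y. frm T l (0, y) (0, y) \<le> - \<epsilon> * (norm y)\<^sup>2"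
    and "continuous_on {zm..zp} (schur T)"
    and "\<forall>l\<in>{zm..zp}. \<exists>P K. schur T l = P + K \<and> uniformly_positive P \<and> compact_operator K"
    and "mu \<in> {zm<..<zp}"
    and "bul_isolated_eigenvalue zm zp T I1 I2 mu"
    and "fin_dim (bul_ker T I1 I2 mu)"
    and "bul_negative_type zm zp T I1 I2 mu"
  shows "op_isolated_eigenvalue zm zp (schur T) mu \<and> op_negative_type zm zp (schur T) mu
         \<and> fin_dim (op_ker (schur T mu)) \<and> dim (op_ker (schur T mu)) = dim (bul_ker T I1 I2 mu)"
proof -
  obtain ep where ep: "ep > 0" and c: "\<forall>l\<in>{zm..zp}. \<forall>y. frm T l (0, y) (0, y) \<le> - ep * (norm y)\<^sup>2"
    using assms(8) by blast
  interpret schur_emb T zm zp ep I1 I2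
    by unfold_locales (use ep c assms(2-5) in auto)
  show ?thesis by (rule main_result) (use assms in auto)
qed

end
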